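(* Let $D$ be an integral domain which is atomic or completely integrally closed, and let $R$ be a ring extension of $D$. If some prime element of $D$ is invertible in $R$, then $R$ has a conch maximal subring.
   Context: All rings are commutative with $1\neq0$ and subrings are unital. An atomic domain is one in which every nonzero nonunit is a finite product of irreducible elements. A maximal subring is a proper subring maximal with respect to inclusion among proper subrings. For a unit $x\in R$, a subring $V$ conches $x$ in $R$ if $x^{-1}\in V$, $x\notin V$ and $V$ is maximal among subrings containing $x^{-1}$ but not $x$; a conch maximal subring is a maximal subring conching some unit of $R$. *)

theory Defs
  imports "HOL-Computational_Algebra.Factorial_Ring"
          "HOL-Computational_Algebra.Polynomial_Factorial"
begin

definition is_subring :: "'a::comm_ring_1 set \<Rightarrow> bool" where
  "is_subring V \<longleftrightarrow> 1 \<in> V \<and> (\<forall>x\<in>V. \<forall>y\<in>V. x + y \<in> V \<and> x * y \<in> V) \<and> (\<forall>x\<in>V. - x \<in> V)"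

definition maximal_subring :: "'a::comm_ring_1 set \<Rightarrow> bool" where
  "maximal_subring V \<longleftrightarrow> is_subring V \<and> V \<noteq> UNIV \<and>
     (\<forall>W. is_subring W \<and> V \<subseteq> W \<and> W \<noteq> UNIV \<longrightarrow> W = V)"

definition conches :: "'a::comm_ring_1 set \<Rightarrow> 'a \<Rightarrow> bool" where
  "conches V x \<longleftrightarrow> (\<exists>y. x * y = 1 \<and> is_subring V \<and> y \<in> V \<and> x \<notin> V \<and>
     (\<forall>W. is_subring W \<and> V \<subseteq> W \<and> y \<in> W \<and> x \<notin> W \<longrightarrow> W = V))"

definition conch_maximal_subring :: "'a::comm_ring_1 set \<Rightarrow> bool" where
  "conch_maximal_subring V \<longleftrightarrow> maximal_subring V \<and> (\<exists>x. x dvd 1 \<and> conches V x)"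

definition atomic_domain :: "'b::idom itself \<Rightarrow> bool" where
  "atomic_domain _ \<longleftrightarrow> (\<forall>x::'b. x \<noteq> 0 \<and> \<not> x dvd 1 \<longrightarrow>
     (\<exists>xs. (\<forall>z\<in>set xs. irreducible z) \<and> x = prod_list xs))"

definition completely_integrally_closed :: "'b::idom itself \<Rightarrow> bool" where
  "completely_integrally_closed _ \<longleftrightarrow> (\<forall>u::'b fract.
     (\<exists>d::'b. d \<noteq> 0 \<and> (\<forall>n\<ge>1. to_fract d * u ^ n \<in> range to_fract)) \<longrightarrow> u \<in> range to_fract)"

end

theory Submission
  imports Defs "HOL-Algebra.Ring"
begin


context field
begin

lemma fU: "x \<in> carrier R \<Longrightarrow> x \<noteq> \<zero> \<Longrightarrow> x \<in> Units R"
  by (simp add: field_Units)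
lemma finv_closed: "x \<in> carrier R \<Longrightarrow> x \<noteq> \<zero> \<Longrightarrow> inv x \<in> carrier R"
  by (rule Units_inv_closed[OF fU])
lemma finv_r: "x \<in> carrier R \<Longrightarrow> x \<noteq> \<zero> \<Longrightarrow> x \<otimes> inv x = \<one>"
  by (rule Units_r_inv[OF fU])
lemma finv_l: "x \<in> carrier R \<Longrightarrow> x \<noteq> \<zero> \<Longrightarrow> inv x \<otimes> x = \<one>"
  by (rule Units_l_inv[OF fU])
lemma finv_ne: assumes "x \<in> carrier R" "x \<noteq> \<zero>" shows "inv x \<noteq> \<zero>"
proof
  assume "inv x = \<zero>"
  then have "\<one> = x \<otimes> \<zero>" using finv_r[OF assms] by simp
  then show False using assms by simp
qed
lemma finv_eqI: "x \<in> carrier R \<Longrightarrow> y \<in> carrier R \<Longrightarrow> x \<otimes> y = \<one> \<Longrightarrow> inv x = y"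
  by (rule comm_inv_char)

lemma finv_inv: assumes "x \<in> carrier R" "x \<noteq> \<zero>" shows "inv (inv x) = x"
  by (rule finv_eqI[OF finv_closed[OF assms] assms(1) finv_l[OF assms]])

lemma finv_mult: "x \<in> carrier R \<Longrightarrow> x \<noteq> \<zero> \<Longrightarrow> y \<in> carrier R \<Longrightarrow> y \<noteq> \<zero> \<Longrightarrow>
   inv (x \<otimes> y) = inv x \<otimes> inv y"
proof (rule finv_eqI)
  assume xy: "x \<in> carrier R" "x \<noteq> \<zero>" "y \<in> carrier R" "y \<noteq> \<zero>"
  have e: "\<And>a b. a \<in> carrier R \<Longrightarrow> b \<in> carrier R \<Longrightarrow> x \<otimes> y \<otimes> (a \<otimes> b) = (x \<otimes> a) \<otimes> (y \<otimes> b)"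
    using xy by algebra
  show "x \<otimes> y \<otimes> (inv x \<otimes> inv y) = \<one>"
    using e[of "inv x" "inv y"] xy by (simp add: finv_closed finv_r)
qed (auto simp: finv_closed)

lemma fmult_ne: "x \<in> carrier R \<Longrightarrow> x \<noteq> \<zero> \<Longrightarrow> y \<in> carrier R \<Longrightarrow> y \<noteq> \<zero> \<Longrightarrow> x \<otimes> y \<noteq> \<zero>"
  using integral by metis

fun hev :: "'a list \<Rightarrow> 'a \<Rightarrow> 'a" where
  "hev [] w = \<zero>"
| "hev (c # cs) w = c \<oplus> w \<otimes> hev cs w"

definition sr :: "'a set \<Rightarrow> bool" where
  "sr A \<longleftrightarrow> A \<subseteq> carrier R \<and> \<one> \<in> A \<and> (\<forall>a\<in>A. \<forall>b\<in>A. a \<oplus> b \<in> A \<and> a \<otimes> b \<in> A) \<and> (\<forall>a\<in>A. \<ominus> a \<in> A)"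

lemma srD: assumes "sr A"
  shows "A \<subseteq> carrier R" "\<one> \<in> A" "\<And>a b. a \<in> A \<Longrightarrow> b \<in> A \<Longrightarrow> a \<oplus> b \<in> A"
    "\<And>a b. a \<in> A \<Longrightarrow> b \<in> A \<Longrightarrow> a \<otimes> b \<in> A" "\<And>a. a \<in> A \<Longrightarrow> \<ominus> a \<in> A"
  using assms unfolding sr_def by auto

lemma sr_zero: "sr A \<Longrightarrow> \<zero> \<in> A"
  by (metis one_closed r_neg srD(2,3,5))

lemma sr_minus: "sr A \<Longrightarrow> a \<in> A \<Longrightarrow> b \<in> A \<Longrightarrow> a \<ominus> b \<in> A"
  by (simp add: minus_eq srD(3,5))

lemma sr_pow: "sr A \<Longrightarrow> a \<in> A \<Longrightarrow> a [^] (n::nat) \<in> A"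
  by (induction n) (auto simp: srD)

lemma sr_carr: "sr A \<Longrightarrow> a \<in> A \<Longrightarrow> a \<in> carrier R"
  using srD(1) by blast

lemma hev_closed: "set cs \<subseteq> carrier R \<Longrightarrow> w \<in> carrier R \<Longrightarrow> hev cs w \<in> carrier R"
  by (induction cs) auto

lemma hev_in: "sr A \<Longrightarrow> set cs \<subseteq> A \<Longrightarrow> w \<in> A \<Longrightarrow> hev cs w \<in> A"
  by (induction cs) (auto simp: srD sr_zero)

fun padd :: "'a list \<Rightarrow> 'a list \<Rightarrow> 'a list" where
  "padd [] bs = bs"
| "padd (a # as) [] = a # as"
| "padd (a # as) (b # bs) = (a \<oplus> b) # padd as bs"

lemma hev_padd: "set as \<subseteq> carrier R \<Longrightarrow> set bs \<subseteq> carrier R \<Longrightarrow> w \<in> carrier R \<Longrightarrow>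
   hev (padd as bs) w = hev as w \<oplus> hev bs w"
proof (induction as bs rule: padd.induct)
  case (3 a as b bs)
  then have "hev (padd as bs) w = hev as w \<oplus> hev bs w" by auto
  moreover have "hev as w \<in> carrier R" "hev bs w \<in> carrier R" using 3 hev_closed by auto
  ultimately show ?case using 3 by simp algebra
qed (auto simp: hev_closed)

lemma length_padd: "length (padd as bs) = max (length as) (length bs)"
  by (induction as bs rule: padd.induct) auto

lemma set_padd: "sr A \<Longrightarrow> set as \<subseteq> A \<Longrightarrow> set bs \<subseteq> A \<Longrightarrow> set (padd as bs) \<subseteq> A"
  by (induction as bs rule: padd.induct) (auto simp: srD)

definition nth0 :: "'a list \<Rightarrow> nat \<Rightarrow> 'a" where
  "nth0 xs i = (if i < length xs then xs ! i else \<zero>)"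

lemma nth0_Cons0[simp]: "nth0 (c # cs) 0 = c" by (simp add: nth0_def)
lemma nth0_ConsS[simp]: "nth0 (c # cs) (Suc i) = nth0 cs i" by (simp add: nth0_def)
lemma nth0_Nil[simp]: "nth0 [] i = \<zero>" by (simp add: nth0_def)

lemma nth0_padd: "set as \<subseteq> carrier R \<Longrightarrow> set bs \<subseteq> carrier R \<Longrightarrow>
   nth0 (padd as bs) i = nth0 as i \<oplus> nth0 bs i"
proof (induction as bs arbitrary: i rule: padd.induct)
  case (1 bs)
  have "i < length bs \<Longrightarrow> bs ! i \<in> carrier R" using 1 nth_mem by blast
  then show ?case by (simp add: nth0_def)
next
  case (2 a as)
  have "i < length (a # as) \<Longrightarrow> (a # as) ! i \<in> carrier R" using 2 nth_mem by blast
  then show ?case by (simp add: nth0_def)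
next
  case (3 a as b bs) then show ?case by (cases i) auto
qed

lemma nth0_map: "f \<zero> = \<zero> \<Longrightarrow> nth0 (map f cs) i = f (nth0 cs i)"
  by (simp add: nth0_def)

lemma nth0_in: "sr A \<Longrightarrow> set cs \<subseteq> A \<Longrightarrow> nth0 cs i \<in> A"
  by (auto simp: nth0_def sr_zero)

lemma hev_map_mult: "c \<in> carrier R \<Longrightarrow> set cs \<subseteq> carrier R \<Longrightarrow> w \<in> carrier R \<Longrightarrow>
   hev (map ((\<otimes>) c) cs) w = c \<otimes> hev cs w"
proof (induction cs)
  case (Cons a cs)
  then have "hev cs w \<in> carrier R" using hev_closed by auto
  then show ?case using Cons by simp algebra
qed auto

lemma hev_map_neg: "set cs \<subseteq> carrier R \<Longrightarrow> w \<in> carrier R \<Longrightarrow>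
   hev (map (\<lambda>x. \<ominus> x) cs) w = \<ominus> hev cs w"
proof (induction cs)
  case (Cons a cs)
  then have "hev cs w \<in> carrier R" using hev_closed by auto
  then show ?case using Cons by simp algebra
qed auto

lemma hev_append: "set as \<subseteq> carrier R \<Longrightarrow> set bs \<subseteq> carrier R \<Longrightarrow> w \<in> carrier R \<Longrightarrow>
   hev (as @ bs) w = hev as w \<oplus> w [^] length as \<otimes> hev bs w"
proof (induction as)
  case Nil then show ?case using hev_closed by simp
next
  case (Cons a as)
  then have h: "hev as w \<in> carrier R" "hev bs w \<in> carrier R"
    using hev_closed by auto
  have e: "\<And>P. P \<in> carrier R \<Longrightarrow> a \<oplus> w \<otimes> (hev as w \<oplus> P \<otimes> hev bs w) = (a \<oplus> w \<otimes> hev as w) \<oplus> (P \<otimes> w) \<otimes> hev bs w"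
    using h Cons.prems by (simp add: r_distr m_assoc a_assoc m_lcomm m_comm)
  show ?case using Cons e[of "w [^] length as"] by simp
qed

lemma hev_zeros: "set cs \<subseteq> {\<zero>} \<Longrightarrow> w \<in> carrier R \<Longrightarrow> hev cs w = \<zero>"
  by (induction cs) auto

lemma hev_monom: assumes "e \<in> carrier R" "w \<in> carrier R" shows "hev (replicate k \<zero> @ [e]) w = w [^] k \<otimes> e"
  using assms
proof -
  have "hev (replicate k \<zero>) w = \<zero>" by (rule hev_zeros) (auto simp: assms)
  moreover have "set (replicate k \<zero>) \<subseteq> carrier R" by (auto simp: set_replicate_conv_if)
  ultimately show ?thesis using hev_append[of "replicate k \<zero>" "[e]" w] assms by simp
qed

definition Pa :: "'a set \<Rightarrow> 'a \<Rightarrow> 'a set" where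
  "Pa A w = {hev cs w | cs. set cs \<subseteq> A}"

lemma Pa_mult:
  assumes A: "sr A" and w: "w \<in> carrier R" and as: "set as \<subseteq> A" and bs: "set bs \<subseteq> A"
  shows "\<exists>cs. set cs \<subseteq> A \<and> hev as w \<otimes> hev bs w = hev cs w"
  using as
proof (induction as)
  case Nil
  then show ?case using hev_closed[of bs w] srD(1)[OF A] bs w
    by (intro exI[of _ "[]"]) auto
next
  case (Cons a as)
  then obtain cs where cs: "set cs \<subseteq> A" "hev as w \<otimes> hev bs w = hev cs w" by auto
  have carr: "a \<in> carrier R" "set as \<subseteq> carrier R" "set bs \<subseteq> carrier R" "set cs \<subseteq> carrier R"
    using Cons.prems bs cs srD(1)[OF A] by auto
  have h: "hev as w \<in> carrier R" "hev bs w \<in> carrier R" using carr w hev_closed by auto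
  have "hev (a # as) w \<otimes> hev bs w = a \<otimes> hev bs w \<oplus> w \<otimes> (hev as w \<otimes> hev bs w)"
    using h carr w by simp algebra
  also have "\<dots> = hev (map ((\<otimes>) a) bs) w \<oplus> hev (\<zero> # cs) w"
    using cs carr w hev_closed by (simp add: hev_map_mult)
  also have "\<dots> = hev (padd (map ((\<otimes>) a) bs) (\<zero> # cs)) w"
    using carr w by (subst hev_padd) auto
  finally have eq: "hev (a # as) w \<otimes> hev bs w = hev (padd (map ((\<otimes>) a) bs) (\<zero> # cs)) w" .
  have s1: "set (map ((\<otimes>) a) bs) \<subseteq> A" using bs Cons.prems srD(4)[OF A] by auto
  have s2: "set (\<zero> # cs) \<subseteq> A" using cs sr_zero[OF A] by auto
  show ?case
    using set_padd[OF A s1 s2] eq by blast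
qed

lemma Pa_sr: assumes A: "sr A" and w: "w \<in> carrier R" shows "sr (Pa A w)"
  unfolding sr_def
proof (intro conjI ballI)
  show "Pa A w \<subseteq> carrier R" using hev_closed srD(1)[OF A] w by (auto simp: Pa_def)
  show "\<one> \<in> Pa A w" unfolding Pa_def using A w by (intro CollectI exI[of _ "[\<one>]"]) (auto simp: srD)
  fix a b assume "a \<in> Pa A w" "b \<in> Pa A w"
  then obtain as bs where ab: "set as \<subseteq> A" "a = hev as w" "set bs \<subseteq> A" "b = hev bs w"
    unfolding Pa_def by auto
  have carr: "set as \<subseteq> carrier R" "set bs \<subseteq> carrier R" using ab srD(1)[OF A] by auto
  show "a \<oplus> b \<in> Pa A w" unfolding Pa_def using ab carr w hev_padd set_padd[OF A]
    by (intro CollectI exI[of _ "padd as bs"]) auto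
  show "a \<otimes> b \<in> Pa A w" unfolding Pa_def using Pa_mult[OF A w ab(1) ab(3)] ab by auto
next
  fix a assume "a \<in> Pa A w"
  then obtain as where ab: "set as \<subseteq> A" "a = hev as w" unfolding Pa_def by auto
  have carr: "set as \<subseteq> carrier R" using ab srD(1)[OF A] by auto
  show "\<ominus> a \<in> Pa A w" unfolding Pa_def using ab carr w hev_map_neg srD(5)[OF A]
    by (intro CollectI exI[of _ "map (\<lambda>x. \<ominus> x) as"]) auto
qed

lemma Pa_base: "sr A \<Longrightarrow> w \<in> carrier R \<Longrightarrow> a \<in> A \<Longrightarrow> a \<in> Pa A w"
  unfolding Pa_def by (intro CollectI exI[of _ "[a]"]) (auto simp: sr_carr)

lemma Pa_var: "sr A \<Longrightarrow> w \<in> carrier R \<Longrightarrow> w \<in> Pa A w"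
  unfolding Pa_def by (intro CollectI exI[of _ "[\<zero>, \<one>]"]) (auto simp: srD sr_zero)

end


context field
begin

lemma minus0_eq: assumes "a \<in> carrier R" "b \<in> carrier R" "a \<ominus> b = \<zero>" shows "a = b"
proof -
  have "a = (a \<ominus> b) \<oplus> b" using assms(1,2) by algebra
  then show ?thesis using assms by simp
qed

definition conchK :: "'a set \<Rightarrow> 'a \<Rightarrow> bool" where
  "conchK V t \<longleftrightarrow> sr V \<and> t \<in> V \<and> t \<noteq> \<zero> \<and> inv t \<notin> V \<and> (\<forall>W. sr W \<and> V \<subseteq> W \<and> inv t \<notin> W \<longrightarrow> W = V)"

lemma conchD: assumes "conchK V t" shows "sr V" "t \<in> V" "t \<noteq> \<zero>" "inv t \<notin> V" "t \<in> carrier R"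
  using assms sr_carr unfolding conchK_def by auto

lemma conch_key:
  assumes c: "conchK V t" and y: "y \<in> carrier R" "y \<notin> V"
  shows "\<exists>cs. set cs \<subseteq> V \<and> \<one> = t \<otimes> hev cs y"
proof -
  note V = conchD[OF c]
  have "inv t \<in> Pa V y"
  proof (rule ccontr)
    assume "inv t \<notin> Pa V y"
    moreover have "sr (Pa V y)" by (rule Pa_sr[OF V(1) y(1)])
    moreover have "V \<subseteq> Pa V y" using Pa_base[OF V(1) y(1)] by blast
    ultimately have "Pa V y = V" using c unfolding conchK_def by blast
    then show False using Pa_var[OF V(1) y(1)] y(2) by blast
  qed
  then obtain cs where cs: "set cs \<subseteq> V" "inv t = hev cs y" unfolding Pa_def by auto
  have "\<one> = t \<otimes> inv t" using finv_r[OF V(5) V(3)] by simp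
  then show ?thesis using cs by auto
qed

lemma pow_hev_in:
  assumes V: "sr V" and a: "a \<in> V" and b: "b \<in> carrier R" and ab: "a \<otimes> b = \<one>"
  shows "set cs \<subseteq> V \<Longrightarrow> length cs \<le> Suc m \<Longrightarrow> a [^] m \<otimes> hev cs b \<in> V"
proof (induction cs arbitrary: m)
  case Nil then show ?case using sr_carr[OF V a] sr_zero[OF V] by simp
next
  case (Cons c cs)
  have ac: "a \<in> carrier R" using sr_carr[OF V a] .
  have cc: "c \<in> V" "set cs \<subseteq> V" using Cons.prems by auto
  have ccar: "c \<in> carrier R" using sr_carr[OF V cc(1)] .
  have hc: "hev cs b \<in> carrier R" using hev_closed cc(2) srD(1)[OF V] b by blast
  show ?case
  proof (cases m)
    case 0
    then have "cs = []" using Cons.prems by simp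
    then show ?thesis using 0 cc ccar b by simp
  next
    case (Suc m')
    then have i1: "a [^] m' \<otimes> hev cs b \<in> V" using Cons.IH cc Cons.prems by simp
    have e: "\<And>P. P \<in> carrier R \<Longrightarrow> P \<otimes> a \<otimes> (c \<oplus> b \<otimes> hev cs b) = P \<otimes> a \<otimes> c \<oplus> P \<otimes> (a \<otimes> b) \<otimes> hev cs b"
      using ac b ccar hc by algebra
    have "a [^] m \<otimes> hev (c # cs) b = a [^] m \<otimes> c \<oplus> a [^] m' \<otimes> hev cs b"
      using e[of "a [^] m'"] Suc ac ab by simp
    moreover have "a [^] m \<otimes> c \<in> V" using sr_pow[OF V a] cc srD(4)[OF V] by blast
    ultimately show ?thesis using i1 srD(3)[OF V] by simp
  qed
qed

lemma pow_1mt: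
  assumes V: "sr V" and t: "t \<in> V" and v: "v \<in> V"
  shows "\<exists>g\<in>V. (\<one> \<ominus> t \<otimes> v) [^] (n::nat) = \<one> \<ominus> t \<otimes> g"
proof (induction n)
  case 0
  have "\<one> \<ominus> t \<otimes> \<zero> = \<one>" using sr_carr[OF V t] by (simp add: minus_eq)
  then show ?case using sr_zero[OF V] by force
next
  case (Suc n)
  then obtain g where g: "g \<in> V" "(\<one> \<ominus> t \<otimes> v) [^] n = \<one> \<ominus> t \<otimes> g" by auto
  have c: "t \<in> carrier R" "v \<in> carrier R" "g \<in> carrier R" using V t v g sr_carr by auto
  have "(\<one> \<ominus> t \<otimes> v) [^] Suc n = (\<one> \<ominus> t \<otimes> g) \<otimes> (\<one> \<ominus> t \<otimes> v)" using g by simp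
  also have "\<dots> = \<one> \<ominus> t \<otimes> (g \<oplus> v \<ominus> t \<otimes> g \<otimes> v)" using c by algebra
  finally show ?case using g V t v by (meson sr_minus srD(3,4))
qed

lemma conch_unit:
  assumes c: "conchK V t" and v: "v \<in> V"
  shows "\<one> \<ominus> t \<otimes> v \<noteq> \<zero>" "inv (\<one> \<ominus> t \<otimes> v) \<in> V"
proof -
  note V = conchD[OF c]
  have vc: "v \<in> carrier R" using sr_carr[OF V(1) v] .
  define u where "u = \<one> \<ominus> t \<otimes> v"
  have uV: "u \<in> V" unfolding u_def using V v by (meson sr_minus srD(2,4))
  have uc: "u \<in> carrier R" using sr_carr[OF V(1) uV] .
  have u0: "u \<noteq> \<zero>"
  proof
    assume "u = \<zero>"
    then have "\<one> = t \<otimes> v" using minus0_eq[of "\<one>" "t \<otimes> v"] V(5) vc unfolding u_def by simp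
    then have "inv t = v" using finv_eqI[OF V(5) vc] by simp
    then show False using V(4) v by simp
  qed
  then show "\<one> \<ominus> t \<otimes> v \<noteq> \<zero>" unfolding u_def .
  have "inv u \<in> V"
  proof (rule ccontr)
    assume nV: "inv u \<notin> V"
    have ic: "inv u \<in> carrier R" using finv_closed[OF uc u0] .
    obtain cs where cs: "set cs \<subseteq> V" "\<one> = t \<otimes> hev cs (inv u)" using conch_key[OF c ic nV] by auto
    have hc: "hev cs (inv u) \<in> carrier R" using hev_closed cs(1) srD(1)[OF V(1)] ic by blast
    define e where "e = u [^] length cs \<otimes> hev cs (inv u)"
    have eV: "e \<in> V" unfolding e_def using pow_hev_in[OF V(1) uV ic finv_r[OF uc u0] cs(1)] by simp
    have ec: "e \<in> carrier R" using sr_carr[OF V(1) eV] .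
    obtain g where g: "g \<in> V" "u [^] length cs = \<one> \<ominus> t \<otimes> g" using pow_1mt[OF V(1) V(2) v] unfolding u_def by blast
    have gc: "g \<in> carrier R" using sr_carr[OF V(1) g(1)] .
    have "u [^] length cs = u [^] length cs \<otimes> (t \<otimes> hev cs (inv u))" using cs(2)[symmetric] uc by simp
    also have "\<dots> = t \<otimes> e" unfolding e_def using uc V(5) hc by (simp add: m_lcomm)
    finally have "\<one> \<ominus> t \<otimes> g = t \<otimes> e" using g by simp
    then have "\<one> = t \<otimes> (e \<oplus> g)"
    proof -
      assume h: "\<one> \<ominus> t \<otimes> g = t \<otimes> e"
      have "\<one> = (\<one> \<ominus> t \<otimes> g) \<oplus> t \<otimes> g" using V(5) gc by algebra
      also have "\<dots> = t \<otimes> e \<oplus> t \<otimes> g" using h by simp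
      also have "\<dots> = t \<otimes> (e \<oplus> g)" using V(5) gc ec by algebra
      finally show ?thesis .
    qed
    then have "inv t = e \<oplus> g" using finv_eqI[OF V(5)] ec gc by simp
    then show False using V(4) eV g(1) srD(3)[OF V(1)] by simp
  qed
  then show "inv (\<one> \<ominus> t \<otimes> v) \<in> V" unfolding u_def .
qed

lemma chev_shift:
  assumes V: "sr V" and z: "z \<in> carrier R" and w: "w \<in> carrier R" and zw: "z \<otimes> w = \<one>"
  shows "set es \<subseteq> V \<Longrightarrow> length es \<le> k \<Longrightarrow>
     \<exists>es'. set es' \<subseteq> V \<and> length es' \<le> k \<and> z [^] k \<otimes> w \<otimes> hev es w = hev es' z"
proof (induction es arbitrary: k)
  case Nil
  then show ?case using z w by (intro exI[of _ "[]"]) simp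
next
  case (Cons e es)
  then obtain k' where k: "k = Suc k'" by (cases k) auto
  have ec: "e \<in> V" "set es \<subseteq> V" using Cons.prems by auto
  have ecar: "e \<in> carrier R" using sr_carr[OF V ec(1)] .
  have "\<exists>es'. set es' \<subseteq> V \<and> length es' \<le> k' \<and> z [^] k' \<otimes> w \<otimes> hev es w = hev es' z"
    using Cons.IH[OF ec(2), of k'] Cons.prems k by simp
  then obtain es2 where es2: "set es2 \<subseteq> V" "length es2 \<le> k'" "z [^] k' \<otimes> w \<otimes> hev es w = hev es2 z"
    by blast
  have hc: "hev es w \<in> carrier R" using hev_closed ec(2) srD(1)[OF V] w by blast
  have e1: "\<And>P. P \<in> carrier R \<Longrightarrow> P \<otimes> z \<otimes> w \<otimes> (e \<oplus> w \<otimes> hev es w) = P \<otimes> (z \<otimes> w) \<otimes> e \<oplus> P \<otimes> (z \<otimes> w) \<otimes> w \<otimes> hev es w"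
    using z w ecar hc by algebra
  have "z [^] k \<otimes> w \<otimes> hev (e # es) w = z [^] k' \<otimes> e \<oplus> z [^] k' \<otimes> w \<otimes> hev es w"
    using e1[of "z [^] k'"] k zw z by simp
  also have "\<dots> = hev (replicate k' \<zero> @ [e]) z \<oplus> hev es2 z" using es2(3) hev_monom[OF ecar z] by simp
  also have "\<dots> = hev (padd (replicate k' \<zero> @ [e]) es2) z"
    using hev_padd[of "replicate k' \<zero> @ [e]" es2 z] ecar es2(1) srD(1)[OF V] z
    by (auto simp: set_replicate_conv_if)
  finally have eq: "z [^] k \<otimes> w \<otimes> hev (e # es) w = hev (padd (replicate k' \<zero> @ [e]) es2) z" .
  have s: "set (replicate k' \<zero> @ [e]) \<subseteq> V" using ec sr_zero[OF V] by (auto simp: set_replicate_conv_if)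
  show ?case
    apply (rule exI[of _ "padd (replicate k' \<zero> @ [e]) es2"])
    using eq set_padd[OF V s es2(1)] es2(2) k by (simp add: length_padd)
qed

lemma chev_core:
  assumes c: "conchK V t" and z: "z \<in> carrier R" and w: "w \<in> carrier R" and zw: "z \<otimes> w = \<one>"
    and cs: "set cs \<subseteq> V" "length cs = m" "\<one> = t \<otimes> hev cs z"
    and mmin: "\<forall>cs'. set cs' \<subseteq> V \<and> length cs' < m \<longrightarrow> \<one> \<noteq> t \<otimes> hev cs' z"
    and ds: "set ds \<subseteq> V" "length ds \<le> m" "\<one> = t \<otimes> hev ds w"
  shows False
proof -
  note V = conchD[OF c]
  have VC: "V \<subseteq> carrier R" using srD(1)[OF V(1)] .
  have "ds \<noteq> []" using ds(3) V(5) by auto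
  then obtain d ds' where dd: "ds = d # ds'" by (cases ds) auto
  have dV: "d \<in> V" "set ds' \<subseteq> V" using ds(1) dd by auto
  have dc: "d \<in> carrier R" using dV VC by auto
  have m1: "m \<ge> 1" using ds(2) dd by simp
  define u where "u = \<one> \<ominus> t \<otimes> d"
  have u0: "u \<noteq> \<zero>" and iu: "inv u \<in> V" using conch_unit[OF c dV(1)] unfolding u_def by auto
  have uc: "u \<in> carrier R" unfolding u_def using V(5) dc by simp
  have hw: "hev ds' w \<in> carrier R" using hev_closed dV(2) VC w by blast
  have ueq: "u = t \<otimes> w \<otimes> hev ds' w"
  proof -
    have "u = t \<otimes> (d \<oplus> w \<otimes> hev ds' w) \<ominus> t \<otimes> d" unfolding u_def using ds(3) dd by simp
    also have "\<dots> = t \<otimes> w \<otimes> hev ds' w" using V(5) dc w hw by algebra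
    finally show ?thesis .
  qed
  have iuc: "inv u \<in> carrier R" using finv_closed[OF uc u0] .
  define ds2 where "ds2 = map ((\<otimes>) (inv u)) ds'"
  have ds2V: "set ds2 \<subseteq> V" unfolding ds2_def using dV(2) iu srD(4)[OF V(1)] by auto
  have ds2l: "length ds2 \<le> m - 1" unfolding ds2_def using ds(2) dd by simp
  have one2: "\<one> = t \<otimes> w \<otimes> hev ds2 w"
  proof -
    have "\<one> = inv u \<otimes> u" using finv_l[OF uc u0] by simp
    also have "\<dots> = inv u \<otimes> (t \<otimes> w \<otimes> hev ds' w)" using ueq by simp
    also have "\<dots> = t \<otimes> w \<otimes> (inv u \<otimes> hev ds' w)" using iuc V(5) w hw by algebra
    also have "\<dots> = t \<otimes> w \<otimes> hev ds2 w" unfolding ds2_def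
      using hev_map_mult[OF iuc _ w, of ds'] dV(2) VC by auto
    finally show ?thesis .
  qed
  have "cs \<noteq> []" using cs(2) m1 by auto
  then obtain cs0 cl where csd: "cs = cs0 @ [cl]" by (metis append_butlast_last_id)
  have cs0V: "set cs0 \<subseteq> V" "cl \<in> V" using cs(1) csd by auto
  have clc: "cl \<in> carrier R" using cs0V VC by auto
  have cs0l: "length cs0 = m - 1" using cs(2) csd by simp
  have h0c: "hev cs0 z \<in> carrier R" using hev_closed cs0V(1) VC z by blast
  have hcs: "hev cs z = hev cs0 z \<oplus> z [^] (m - 1) \<otimes> cl"
    using hev_append[of cs0 "[cl]" z] csd cs0V VC z clc cs0l by auto
  obtain es where es: "set es \<subseteq> V" "length es \<le> m - 1" "z [^] (m - 1) \<otimes> w \<otimes> hev ds2 w = hev es z"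
    using chev_shift[OF V(1) z w zw ds2V ds2l] by auto
  have h2c: "hev ds2 w \<in> carrier R" using hev_closed ds2V VC w by blast
  have esc: "set es \<subseteq> carrier R" using es(1) VC by auto
  have "z [^] (m - 1) \<otimes> cl = z [^] (m - 1) \<otimes> cl \<otimes> (t \<otimes> w \<otimes> hev ds2 w)"
    using one2[symmetric] z clc by simp
  also have "\<dots> = (cl \<otimes> t) \<otimes> (z [^] (m - 1) \<otimes> w \<otimes> hev ds2 w)"
  proof -
    have "\<And>P. P \<in> carrier R \<Longrightarrow> P \<otimes> cl \<otimes> (t \<otimes> w \<otimes> hev ds2 w) = (cl \<otimes> t) \<otimes> (P \<otimes> w \<otimes> hev ds2 w)"
      using clc V(5) w h2c by algebra
    then show ?thesis using z by simp
  qed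
  also have "\<dots> = hev (map ((\<otimes>) (cl \<otimes> t)) es) z" using es(3) hev_map_mult[of "cl \<otimes> t" es z] clc V(5) esc z by simp
  finally have e2: "z [^] (m - 1) \<otimes> cl = hev (map ((\<otimes>) (cl \<otimes> t)) es) z" .
  define fs where "fs = padd cs0 (map ((\<otimes>) (cl \<otimes> t)) es)"
  have mV: "set (map ((\<otimes>) (cl \<otimes> t)) es) \<subseteq> V" using es(1) cs0V(2) V(2) srD(4)[OF V(1)] by auto
  have fsV: "set fs \<subseteq> V" unfolding fs_def using set_padd[OF V(1) cs0V(1) mV] .
  have fsl: "length fs < m" unfolding fs_def using cs0l es(2) m1 by (simp add: length_padd)
  have "hev fs z = hev cs z" unfolding fs_def using hev_padd[of cs0 "map ((\<otimes>) (cl \<otimes> t)) es" z] hcs e2 cs0V mV VC z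
    by auto
  then show False using mmin fsV fsl cs(3) by auto
qed

lemma conch_val:
  assumes c: "conchK V t" and z: "z \<in> carrier R" "z \<noteq> \<zero>"
  shows "z \<in> V \<or> inv z \<in> V"
proof (rule ccontr)
  assume "\<not> (z \<in> V \<or> inv z \<in> V)"
  then have nz: "z \<notin> V" and nw: "inv z \<notin> V" by auto
  have w: "inv z \<in> carrier R" using finv_closed[OF z] .
  have zw: "z \<otimes> inv z = \<one>" using finv_r[OF z] .
  have wz: "inv z \<otimes> z = \<one>" using finv_l[OF z] .
  define P where "P = (\<lambda>x m. \<exists>cs. set cs \<subseteq> V \<and> length cs = m \<and> \<one> = t \<otimes> hev cs x)"
  have ex1: "\<exists>m. P z m" using conch_key[OF c z(1) nz] unfolding P_def by auto
  have ex2: "\<exists>m. P (inv z) m" using conch_key[OF c w nw] unfolding P_def by auto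
  define m where "m = (LEAST m. P z m)"
  define n where "n = (LEAST m. P (inv z) m)"
  have Pm: "P z m" unfolding m_def using LeastI_ex[OF ex1] .
  have Pn: "P (inv z) n" unfolding n_def using LeastI_ex[OF ex2] .
  have mmin: "\<forall>cs'. set cs' \<subseteq> V \<and> length cs' < m \<longrightarrow> \<one> \<noteq> t \<otimes> hev cs' z"
    using not_less_Least[of _ "P z"] unfolding m_def P_def by blast
  have nmin: "\<forall>cs'. set cs' \<subseteq> V \<and> length cs' < n \<longrightarrow> \<one> \<noteq> t \<otimes> hev cs' (inv z)"
    using not_less_Least[of _ "P (inv z)"] unfolding n_def P_def by blast
  obtain cs where cs: "set cs \<subseteq> V" "length cs = m" "\<one> = t \<otimes> hev cs z" using Pm unfolding P_def by auto
  obtain ds where ds: "set ds \<subseteq> V" "length ds = n" "\<one> = t \<otimes> hev ds (inv z)" using Pn unfolding P_def by auto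
  show False
  proof (cases "n \<le> m")
    case True
    show False using chev_core[OF c z(1) w zw cs mmin ds(1) _ ds(3)] True ds(2) by simp
  next
    case False
    show False using chev_core[OF c w z(1) wz ds nmin cs(1) _ cs(3)] False cs(2) by simp
  qed
qed

lemma conch_integral:
  assumes c: "conchK V t" and z: "z \<in> carrier R" and cs: "set cs \<subseteq> V" "length cs \<le> n"
    and eq: "z [^] n = hev cs z"
  shows "z \<in> V"
proof (rule ccontr)
  assume nz: "z \<notin> V"
  note V = conchD[OF c]
  have z0: "z \<noteq> \<zero>" using sr_zero[OF V(1)] nz by auto
  have wV: "inv z \<in> V" using conch_val[OF c z z0] nz by auto
  have w: "inv z \<in> carrier R" using finv_closed[OF z z0] .
  have "n \<noteq> 0"
  proof
    assume "n = 0"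
    then have "cs = []" using cs(2) by simp
    then show False using eq \<open>n = 0\<close> by simp
  qed
  then obtain m where n: "n = Suc m" by (cases n) auto
  have "inv z [^] m \<otimes> hev cs z \<in> V"
    using pow_hev_in[OF V(1) wV z finv_l[OF z z0] cs(1)] cs(2) n by simp
  moreover have "inv z [^] m \<otimes> hev cs z = z"
  proof -
    have "inv z [^] m \<otimes> hev cs z = inv z [^] m \<otimes> (z [^] m \<otimes> z)" using eq n by simp
    also have "\<dots> = (inv z [^] m \<otimes> z [^] m) \<otimes> z" using w z by (simp add: m_assoc)
    also have "\<dots> = (inv z \<otimes> z) [^] m \<otimes> z" using nat_pow_distrib[OF w z] by simp
    also have "\<dots> = z" using finv_l[OF z z0] z by simp
    finally show ?thesis .
  qed
  ultimately show False using nz by simp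
qed

end


context field
begin

definition unitS :: "'a set \<Rightarrow> 'a \<Rightarrow> bool" where
  "unitS S u \<longleftrightarrow> u \<in> S \<and> u \<noteq> \<zero> \<and> inv u \<in> S"

definition dvrl :: "'a set \<Rightarrow> 'a \<Rightarrow> bool" where
  "dvrl S t \<longleftrightarrow> (\<forall>s\<in>S. s \<noteq> \<zero> \<longrightarrow> (\<exists>k::nat. \<exists>u. unitS S u \<and> s = t [^] k \<otimes> u))"

definition GG :: "'a \<Rightarrow> 'a set set" where
  "GG t = {S. sr S \<and> t \<in> S \<and> t \<noteq> \<zero> \<and> inv t \<notin> S \<and> dvrl S t}"

lemma GGD: assumes "S \<in> GG t"
  shows "sr S" "t \<in> S" "t \<noteq> \<zero>" "inv t \<notin> S" "dvrl S t" "t \<in> carrier R" "S \<subseteq> carrier R"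
  using assms sr_carr srD(1) unfolding GG_def by auto

lemma unitS_carr: "sr S \<Longrightarrow> unitS S u \<Longrightarrow> u \<in> carrier R"
  unfolding unitS_def using sr_carr by blast

lemma pow_ne0: "x \<in> carrier R \<Longrightarrow> x \<noteq> \<zero> \<Longrightarrow> x [^] (n::nat) \<noteq> \<zero>"
  by (induction n) (auto simp: integral_iff)

lemma G1:
  assumes S: "S \<in> GG t" and s: "s \<in> S"
  shows "unitS S s \<or> (\<exists>a\<in>S. s = t \<otimes> a)"
proof (cases "s = \<zero>")
  case True
  then show ?thesis using GGD[OF S] sr_zero by (metis r_null)
next
  case False
  note G = GGD[OF S]
  obtain k u where ku: "unitS S u" "s = t [^] (k::nat) \<otimes> u" using G(5) s False unfolding dvrl_def by blast
  have uc: "u \<in> carrier R" using unitS_carr[OF G(1) ku(1)] .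
  show ?thesis
  proof (cases k)
    case 0 then show ?thesis using ku uc by simp
  next
    case (Suc k')
    then have "s = t \<otimes> (t [^] k' \<otimes> u)" using ku uc G(6) by (simp add: nat_pow_Suc2 m_assoc m_lcomm)
    moreover have "t [^] k' \<otimes> u \<in> S" using sr_pow[OF G(1) G(2)] ku(1) srD(4)[OF G(1)] unfolding unitS_def by blast
    ultimately show ?thesis by blast
  qed
qed

lemma G2:
  assumes S: "S \<in> GG t" and u: "unitS S u" and a: "a \<in> S" and eq: "u = t \<otimes> a"
  shows False
proof -
  note G = GGD[OF S]
  have uc: "u \<in> carrier R" "u \<noteq> \<zero>" "inv u \<in> S" using unitS_carr[OF G(1) u] u unfolding unitS_def by auto
  have iuc: "inv u \<in> carrier R" using sr_carr[OF G(1) uc(3)] .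
  have ac: "a \<in> carrier R" using sr_carr[OF G(1) a] .
  have "\<one> = u \<otimes> inv u" using finv_r[OF uc(1,2)] by simp
  also have "\<dots> = t \<otimes> (a \<otimes> inv u)" using eq G(6) ac iuc by (simp add: m_assoc)
  finally have "inv t = a \<otimes> inv u" using finv_eqI[OF G(6)] ac iuc by simp
  then show False using G(4) a uc(3) srD(4)[OF G(1)] by simp
qed

lemma G4:
  assumes S: "sr S" and u: "unitS S u" and v: "unitS S v"
  shows "unitS S (u \<otimes> v)"
proof -
  have c: "u \<in> carrier R" "v \<in> carrier R" using unitS_carr S u v by auto
  have n: "u \<noteq> \<zero>" "v \<noteq> \<zero>" using u v unfolding unitS_def by auto
  show ?thesis unfolding unitS_def
    using finv_mult[OF c(1) n(1) c(2) n(2)] u v srD(4)[OF S] fmult_ne[OF c(1) n(1) c(2) n(2)]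
    unfolding unitS_def by auto
qed

lemma unitS_one: "sr S \<Longrightarrow> unitS S \<one>"
  unfolding unitS_def using srD(2) finv_eqI[of "\<one>" "\<one>"] by auto

lemma G5:
  assumes S: "S \<in> GG t" and s: "s \<in> S" "s \<noteq> \<zero>"
  shows "\<exists>K. \<forall>a\<in>S. s \<noteq> t [^] Suc K \<otimes> a"
proof -
  note G = GGD[OF S]
  obtain k u where ku: "unitS S u" "s = t [^] (k::nat) \<otimes> u" using G(5) s unfolding dvrl_def by blast
  have uc: "u \<in> carrier R" using unitS_carr[OF G(1) ku(1)] .
  have "\<forall>a\<in>S. s \<noteq> t [^] Suc k \<otimes> a"
  proof (intro ballI notI)
    fix a assume a: "a \<in> S" and eq: "s = t [^] Suc k \<otimes> a"
    have ac: "a \<in> carrier R" using sr_carr[OF G(1) a] .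
    have "t [^] k \<otimes> u = t [^] k \<otimes> (t \<otimes> a)" using eq ku(2) G(6) ac by (simp add: m_assoc)
    then have "u = t \<otimes> a" using m_lcancel[OF pow_ne0[OF G(6) G(3)]] uc G(6) ac by simp
    then show False using G2[OF S ku(1) a] by simp
  qed
  then show ?thesis by blast
qed

definition transc :: "'a set \<Rightarrow> 'a \<Rightarrow> bool" where
  "transc S y \<longleftrightarrow> (\<forall>cs. set cs \<subseteq> S \<and> hev cs y = \<zero> \<longrightarrow> set cs \<subseteq> {\<zero>})"

lemma nth0_zero: "set cs \<subseteq> {\<zero>} \<Longrightarrow> nth0 cs i = \<zero>"
  unfolding nth0_def using nth_mem by fastforce

lemma trans_uniq:
  assumes S: "sr S" and y: "y \<in> carrier R" and tr: "transc S y"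
    and cs: "set cs \<subseteq> S" and ds: "set ds \<subseteq> S" and eq: "hev cs y = hev ds y"
  shows "nth0 cs i = nth0 ds i"
proof -
  have SC: "S \<subseteq> carrier R" using srD(1)[OF S] .
  define es where "es = padd cs (map (\<lambda>x. \<ominus> x) ds)"
  have mds: "set (map (\<lambda>x. \<ominus> x) ds) \<subseteq> S" using ds srD(5)[OF S] by auto
  have esS: "set es \<subseteq> S" unfolding es_def using set_padd[OF S cs mds] .
  have "hev es y = hev cs y \<oplus> \<ominus> hev ds y"
    unfolding es_def using hev_padd[of cs "map (\<lambda>x. \<ominus> x) ds" y] hev_map_neg[of ds y] cs mds ds SC y by auto
  also have "\<dots> = \<zero>"
  proof -
    have "hev ds y \<in> carrier R" using hev_closed[of ds y] ds SC y by blast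
    then show ?thesis using eq by (simp add: r_neg)
  qed
  finally have "set es \<subseteq> {\<zero>}" using tr esS unfolding transc_def by blast
  then have "nth0 es i = \<zero>" by (rule nth0_zero)
  moreover have "nth0 es i = nth0 cs i \<oplus> \<ominus> nth0 ds i"
    unfolding es_def using nth0_padd[of cs "map (\<lambda>x. \<ominus> x) ds" i] nth0_map[of "\<lambda>x. \<ominus> x" ds i] cs mds SC by auto
  ultimately show ?thesis using minus0_eq[of "nth0 cs i" "nth0 ds i"] nth0_in[OF S cs, of i] nth0_in[OF S ds, of i] SC
    by (auto simp: minus_eq)
qed

lemma trans_coeff:
  assumes S: "sr S" and y: "y \<in> carrier R" and tr: "transc S y" and c: "c \<in> S"
    and cs: "set cs \<subseteq> S" and ds: "set ds \<subseteq> S" and eq: "hev cs y = c \<otimes> hev ds y"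
  shows "nth0 cs i = c \<otimes> nth0 ds i"
proof -
  have SC: "S \<subseteq> carrier R" using srD(1)[OF S] .
  have m: "set (map ((\<otimes>) c) ds) \<subseteq> S" using ds c srD(4)[OF S] by auto
  have cc: "c \<in> carrier R" "set ds \<subseteq> carrier R" using c ds SC by auto
  have "hev cs y = hev (map ((\<otimes>) c) ds) y" using eq hev_map_mult[OF cc y] by simp
  then have "nth0 cs i = nth0 (map ((\<otimes>) c) ds) i" using trans_uniq[OF S y tr cs m] by simp
  also have "\<dots> = c \<otimes> nth0 ds i" using nth0_map[of "(\<otimes>) c" ds i] c SC by auto
  finally show ?thesis .
qed

end


context field
begin

lemma allT:
  assumes S: "sr S" and t: "t \<in> carrier R"
  shows "set as \<subseteq> S \<Longrightarrow> (\<forall>i. \<exists>a\<in>S. nth0 as i = t \<otimes> a) \<Longrightarrow> \<exists>bs. set bs \<subseteq> S \<and> as = map ((\<otimes>) t) bs"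
proof (induction as)
  case Nil then show ?case by auto
next
  case (Cons c as)
  from Cons.prems(2) obtain a where a: "a \<in> S" "c = t \<otimes> a" by (metis nth0_Cons0)
  have "\<forall>i. \<exists>a\<in>S. nth0 as i = t \<otimes> a"
  proof
    fix i show "\<exists>a\<in>S. nth0 as i = t \<otimes> a" using Cons.prems(2) nth0_ConsS[of c as i] by metis
  qed
  then obtain bs where "set bs \<subseteq> S" "as = map ((\<otimes>) t) bs" using Cons by auto
  then show ?case using a by (intro exI[of _ "a # bs"]) auto
qed

lemma not_tP_coeff:
  assumes S: "sr S" and t: "t \<in> carrier R" and y: "y \<in> carrier R" and as: "set as \<subseteq> S"
    and nt: "\<not>(\<exists>b\<in>Pa S y. hev as y = t \<otimes> b)"
  shows "\<exists>i. \<not>(\<exists>c\<in>S. nth0 as i = t \<otimes> c)"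
proof (rule ccontr)
  assume "\<not> (\<exists>i. \<not>(\<exists>c\<in>S. nth0 as i = t \<otimes> c))"
  then have "\<forall>i. \<exists>c\<in>S. nth0 as i = t \<otimes> c" by blast
  then obtain bs where bs: "set bs \<subseteq> S" "as = map ((\<otimes>) t) bs" using allT[OF S t as] by blast
  have "hev as y = t \<otimes> hev bs y" using bs hev_map_mult[of t bs y] t y srD(1)[OF S] by auto
  moreover have "hev bs y \<in> Pa S y" unfolding Pa_def using bs by auto
  ultimately show False using nt by blast
qed

lemma dec:
  assumes S: "S \<in> GG t" and y: "y \<in> carrier R"
  shows "set cs \<subseteq> S \<Longrightarrow> \<not>(\<exists>a\<in>S. nth0 cs i = t \<otimes> a) \<Longrightarrow>
     \<exists>A0 k u A1. (\<exists>b\<in>Pa S y. A0 = t \<otimes> b) \<and> unitS S u \<and> A1 \<in> Pa S y \<and>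
        hev cs y = A0 \<oplus> y [^] (k::nat) \<otimes> (u \<oplus> y \<otimes> A1)"
proof (induction cs arbitrary: i)
  case Nil
  then show ?case using GGD[OF S] sr_zero[of S] by (metis nth0_Nil r_null)
next
  case (Cons c cs)
  note G = GGD[OF S]
  have PS: "sr (Pa S y)" using Pa_sr[OF G(1) y] .
  have PC: "Pa S y \<subseteq> carrier R" using srD(1)[OF PS] .
  have cS: "c \<in> S" "set cs \<subseteq> S" using Cons.prems by auto
  have cc: "c \<in> carrier R" using cS G(7) by auto
  have hP: "hev cs y \<in> Pa S y" unfolding Pa_def using cS by auto
  have hc: "hev cs y \<in> carrier R" using hP PC by auto
  have z0: "\<exists>b\<in>Pa S y. \<zero> = t \<otimes> b" using sr_zero[OF PS] G(6) by (metis r_null)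
  show ?case
  proof (cases "unitS S c")
    case True
    have "hev (c # cs) y = \<zero> \<oplus> y [^] (0::nat) \<otimes> (c \<oplus> y \<otimes> hev cs y)" using cc hc y by simp
    then show ?thesis using True z0 hP by blast
  next
    case False
    then obtain a where a: "a \<in> S" "c = t \<otimes> a" using G1[OF S cS(1)] by blast
    have "i \<noteq> 0" using Cons.prems(2) a by (metis nth0_Cons0)
    then obtain i' where i: "i = Suc i'" by (cases i) auto
    have "\<not>(\<exists>a\<in>S. nth0 cs i' = t \<otimes> a)" using Cons.prems(2) i by simp
    then have "\<exists>A0 k u A1. (\<exists>b\<in>Pa S y. A0 = t \<otimes> b) \<and> unitS S u \<and> A1 \<in> Pa S y \<and>
        hev cs y = A0 \<oplus> y [^] (k::nat) \<otimes> (u \<oplus> y \<otimes> A1)" by (rule Cons.IH[OF cS(2)])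
    then obtain A0 k u A1 where IH: "\<exists>b\<in>Pa S y. A0 = t \<otimes> b" "unitS S u" "A1 \<in> Pa S y"
        "hev cs y = A0 \<oplus> y [^] (k::nat) \<otimes> (u \<oplus> y \<otimes> A1)"
      by blast
    obtain b' where b': "b' \<in> Pa S y" "A0 = t \<otimes> b'" using IH(1) by blast
    have ac: "a \<in> carrier R" using a G(7) by auto
    have b'c: "b' \<in> carrier R" using b' PC by auto
    have uc: "u \<in> carrier R" using unitS_carr[OF G(1) IH(2)] .
    have A1c: "A1 \<in> carrier R" using IH(3) PC by auto
    have e: "\<And>P. P \<in> carrier R \<Longrightarrow> t \<otimes> a \<oplus> y \<otimes> (t \<otimes> b' \<oplus> P \<otimes> (u \<oplus> y \<otimes> A1)) =
        t \<otimes> (a \<oplus> y \<otimes> b') \<oplus> (P \<otimes> y) \<otimes> (u \<oplus> y \<otimes> A1)"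
      using G(6) ac y b'c uc A1c by algebra
    have "hev (c # cs) y = t \<otimes> (a \<oplus> y \<otimes> b') \<oplus> y [^] Suc k \<otimes> (u \<oplus> y \<otimes> A1)"
      using e[of "y [^] k"] IH(4) b'(2) a(2) y by simp
    moreover have "a \<oplus> y \<otimes> b' \<in> Pa S y"
      using Pa_base[OF G(1) y a(1)] Pa_var[OF G(1) y] b'(1) srD(3,4)[OF PS] by blast
    ultimately show ?thesis using IH(2,3) by blast
  qed
qed

lemma nth0_rep: "nth0 (replicate n \<zero> @ x # xs) n = x"
  unfolding nth0_def by (simp add: nth_append)

lemma gauss:
  assumes S: "S \<in> GG t" and y: "y \<in> carrier R" and tr: "transc S y"
    and a: "a \<in> Pa S y" "\<not>(\<exists>c\<in>Pa S y. a = t \<otimes> c)"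
    and b: "b \<in> Pa S y" "\<not>(\<exists>c\<in>Pa S y. b = t \<otimes> c)"
  shows "\<not>(\<exists>e\<in>Pa S y. a \<otimes> b = t \<otimes> e)"
proof
  assume "\<exists>e\<in>Pa S y. a \<otimes> b = t \<otimes> e"
  then obtain e where e: "e \<in> Pa S y" "a \<otimes> b = t \<otimes> e" by blast
  note G = GGD[OF S]
  have PS: "sr (Pa S y)" using Pa_sr[OF G(1) y] .
  have PC: "Pa S y \<subseteq> carrier R" using srD(1)[OF PS] .
  have SP: "S \<subseteq> Pa S y" using Pa_base[OF G(1) y] by blast
  obtain as where as: "set as \<subseteq> S" "a = hev as y" using a(1) unfolding Pa_def by auto
  obtain bs where bs: "set bs \<subseteq> S" "b = hev bs y" using b(1) unfolding Pa_def by auto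
  obtain i where i: "\<not>(\<exists>c\<in>S. nth0 as i = t \<otimes> c)" using not_tP_coeff[OF G(1) G(6) y as(1)] a(2) as(2) by blast
  obtain j where j: "\<not>(\<exists>c\<in>S. nth0 bs j = t \<otimes> c)" using not_tP_coeff[OF G(1) G(6) y bs(1)] b(2) bs(2) by blast
  obtain A0 k u A1 where da: "\<exists>b\<in>Pa S y. A0 = t \<otimes> b" "unitS S u" "A1 \<in> Pa S y"
        "hev as y = A0 \<oplus> y [^] (k::nat) \<otimes> (u \<oplus> y \<otimes> A1)"
    using dec[OF S y as(1) i] by blast
  obtain B0 l v B1 where db: "\<exists>b\<in>Pa S y. B0 = t \<otimes> b" "unitS S v" "B1 \<in> Pa S y"
        "hev bs y = B0 \<oplus> y [^] (l::nat) \<otimes> (v \<oplus> y \<otimes> B1)"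
    using dec[OF S y bs(1) j] by blast
  obtain a0 where a0: "a0 \<in> Pa S y" "A0 = t \<otimes> a0" using da(1) by blast
  obtain b0 where b0: "b0 \<in> Pa S y" "B0 = t \<otimes> b0" using db(1) by blast
  have uP: "u \<in> Pa S y" "v \<in> Pa S y" using da(2) db(2) SP unfolding unitS_def by auto
  have yP: "y \<in> Pa S y" using Pa_var[OF G(1) y] .
  have cs: "u \<in> carrier R" "v \<in> carrier R" "A1 \<in> carrier R" "B1 \<in> carrier R" "a0 \<in> carrier R" "b0 \<in> carrier R"
    "b \<in> carrier R" "e \<in> carrier R"
    using uP da(3) db(3) a0(1) b0(1) b(1) e(1) PC by auto
  define C where "C = u \<otimes> B1 \<oplus> A1 \<otimes> v \<oplus> y \<otimes> A1 \<otimes> B1"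
  have CP: "C \<in> Pa S y"
  proof -
    have "u \<otimes> B1 \<in> Pa S y" "A1 \<otimes> v \<in> Pa S y" "y \<otimes> A1 \<in> Pa S y" using uP da(3) db(3) yP srD(4)[OF PS] by auto
    then have "y \<otimes> A1 \<otimes> B1 \<in> Pa S y" using db(3) srD(4)[OF PS] by auto
    then show ?thesis unfolding C_def using \<open>u \<otimes> B1 \<in> Pa S y\<close> \<open>A1 \<otimes> v \<in> Pa S y\<close> srD(3)[OF PS] by auto
  qed
  have Cc: "C \<in> carrier R" using CP PC by auto
  define Y where "Y = u \<oplus> y \<otimes> A1"
  have YP: "Y \<in> Pa S y" unfolding Y_def using uP da(3) yP srD(3)[OF PS] srD(4)[OF PS] by auto
  have Yc: "Y \<in> carrier R" using YP PC by auto
  have ykP: "y [^] k \<in> Pa S y" using sr_pow[OF PS yP] .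
  have ident2: "Y \<otimes> (v \<oplus> y \<otimes> B1) = u \<otimes> v \<oplus> y \<otimes> C"
    unfolding C_def Y_def using cs y by algebra
  have ident1: "\<And>P Q W. P \<in> carrier R \<Longrightarrow> Q \<in> carrier R \<Longrightarrow> W \<in> carrier R \<Longrightarrow>
     (t \<otimes> a0 \<oplus> P \<otimes> Y) \<otimes> (t \<otimes> b0 \<oplus> Q \<otimes> W) =
     t \<otimes> (a0 \<otimes> (t \<otimes> b0 \<oplus> Q \<otimes> W) \<oplus> P \<otimes> Y \<otimes> b0) \<oplus> (P \<otimes> Q) \<otimes> (Y \<otimes> W)"
    using cs Yc G(6) by algebra
  have ident: "(t \<otimes> a0 \<oplus> P \<otimes> Y) \<otimes> (t \<otimes> b0 \<oplus> Q \<otimes> (v \<oplus> y \<otimes> B1)) =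
     t \<otimes> (a0 \<otimes> (t \<otimes> b0 \<oplus> Q \<otimes> (v \<oplus> y \<otimes> B1)) \<oplus> P \<otimes> Y \<otimes> b0) \<oplus> (P \<otimes> Q) \<otimes> (u \<otimes> v \<oplus> y \<otimes> C)"
    if PQ: "P \<in> carrier R" "Q \<in> carrier R" for P Q
  proof -
    have "v \<oplus> y \<otimes> B1 \<in> carrier R" using cs y by simp
    then show ?thesis using ident1[OF PQ] ident2 by simp
  qed
  have ab: "a \<otimes> b = t \<otimes> (a0 \<otimes> b \<oplus> y [^] k \<otimes> Y \<otimes> b0) \<oplus> y [^] (k + l) \<otimes> (u \<otimes> v \<oplus> y \<otimes> C)"
    using ident[of "y [^] k" "y [^] l"] as(2) bs(2) da(4) db(4) a0(2) b0(2) y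
    by (simp add: nat_pow_mult Y_def)
  define e' where "e' = e \<ominus> (a0 \<otimes> b \<oplus> y [^] k \<otimes> Y \<otimes> b0)"
  have e'P: "e' \<in> Pa S y"
  proof -
    have "a0 \<otimes> b \<in> Pa S y" "y [^] k \<otimes> Y \<in> Pa S y" using a0(1) b(1) ykP YP srD(4)[OF PS] by auto
    then have "a0 \<otimes> b \<oplus> y [^] k \<otimes> Y \<otimes> b0 \<in> Pa S y" using b0(1) srD(3)[OF PS] srD(4)[OF PS] by auto
    then show ?thesis unfolding e'_def using e(1) sr_minus[OF PS] by auto
  qed
  have W: "a0 \<otimes> b \<oplus> y [^] k \<otimes> Y \<otimes> b0 \<in> carrier R" using cs Yc y by simp
  have Zc: "y [^] (k + l) \<otimes> (u \<otimes> v \<oplus> y \<otimes> C) \<in> carrier R" using cs Cc y by simp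
  have main: "y [^] (k + l) \<otimes> (u \<otimes> v \<oplus> y \<otimes> C) = t \<otimes> e'"
  proof -
    have "\<And>Zz Xx. Zz \<in> carrier R \<Longrightarrow> Xx \<in> carrier R \<Longrightarrow> t \<otimes> e = t \<otimes> Xx \<oplus> Zz \<Longrightarrow> Zz = t \<otimes> (e \<ominus> Xx)"
    proof -
      fix Zz Xx assume h: "Zz \<in> carrier R" "Xx \<in> carrier R" "t \<otimes> e = t \<otimes> Xx \<oplus> Zz"
      have "t \<otimes> (e \<ominus> Xx) = t \<otimes> e \<ominus> t \<otimes> Xx" using h cs G(6) by algebra
      also have "\<dots> = t \<otimes> Xx \<oplus> Zz \<ominus> t \<otimes> Xx" using h by simp
      also have "\<dots> = Zz" using h G(6) by algebra
      finally show "Zz = t \<otimes> (e \<ominus> Xx)" by simp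
    qed
    then show ?thesis unfolding e'_def using ab e(2) W Zc by simp
  qed
  obtain Cs where Cs: "set Cs \<subseteq> S" "C = hev Cs y" using CP unfolding Pa_def by auto
  obtain es where es: "set es \<subseteq> S" "e' = hev es y" using e'P unfolding Pa_def by auto
  have uvS: "u \<otimes> v \<in> S" using da(2) db(2) srD(4)[OF G(1)] unfolding unitS_def by auto
  have lS: "set (replicate (k + l) \<zero> @ (u \<otimes> v) # Cs) \<subseteq> S" using Cs(1) uvS sr_zero[OF G(1)]
    by (auto simp: set_replicate_conv_if)
  have "hev (replicate (k + l) \<zero> @ (u \<otimes> v) # Cs) y = y [^] (k + l) \<otimes> (u \<otimes> v \<oplus> y \<otimes> C)"
  proof -
    have "hev (replicate (k + l) \<zero>) y = \<zero>" by (rule hev_zeros) (auto simp: y)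
    moreover have "set (replicate (k + l) \<zero>) \<subseteq> carrier R" by (auto simp: set_replicate_conv_if)
    moreover have "set ((u \<otimes> v) # Cs) \<subseteq> carrier R" using lS G(7) by auto
    ultimately show ?thesis using hev_append[of "replicate (k + l) \<zero>" "(u \<otimes> v) # Cs" y] y Cs(2) Zc
      by simp
  qed
  then have "hev (replicate (k + l) \<zero> @ (u \<otimes> v) # Cs) y = t \<otimes> hev es y" using main es(2) by simp
  then have "nth0 (replicate (k + l) \<zero> @ (u \<otimes> v) # Cs) (k + l) = t \<otimes> nth0 es (k + l)"
    using trans_coeff[OF G(1) y tr G(2) lS es(1)] by blast
  then have "u \<otimes> v = t \<otimes> nth0 es (k + l)" by (simp add: nth0_rep)
  then show False using G2[OF S G4[OF G(1) da(2) db(2)] nth0_in[OF G(1) es(1)]] by blast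
qed

end


context field
begin

lemma factor_t:
  assumes S: "S \<in> GG t" and y: "y \<in> carrier R" and tr: "transc S y" and a: "a \<in> Pa S y" "a \<noteq> \<zero>"
  shows "\<exists>k a'. a' \<in> Pa S y \<and> \<not>(\<exists>b\<in>Pa S y. a' = t \<otimes> b) \<and> a = t [^] (k::nat) \<otimes> a'"
proof -
  note G = GGD[OF S]
  have PS: "sr (Pa S y)" using Pa_sr[OF G(1) y] .
  have PC: "Pa S y \<subseteq> carrier R" using srD(1)[OF PS] .
  obtain as where as: "set as \<subseteq> S" "a = hev as y" using a(1) unfolding Pa_def by auto
  have "\<exists>i. nth0 as i \<noteq> \<zero>"
  proof (rule ccontr)
    assume "\<not> (\<exists>i. nth0 as i \<noteq> \<zero>)"
    then have "set as \<subseteq> {\<zero>}" unfolding nth0_def by (metis in_set_conv_nth singletonI subsetI)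
    then show False using a(2) as(2) hev_zeros y by simp
  qed
  then obtain i where i: "nth0 as i \<noteq> \<zero>" by blast
  have ciS: "nth0 as i \<in> S" using nth0_in[OF G(1) as(1)] .
  obtain K where K: "\<forall>b\<in>S. nth0 as i \<noteq> t [^] Suc K \<otimes> b" using G5[OF S ciS i] by blast
  define Q where "Q n \<longleftrightarrow> (\<exists>b\<in>Pa S y. a = t [^] (n::nat) \<otimes> b)" for n
  have nQ: "\<not> Q (Suc K)"
  proof
    assume "Q (Suc K)"
    then obtain b where b: "b \<in> Pa S y" "a = t [^] Suc K \<otimes> b" unfolding Q_def by blast
    obtain bs where bs: "set bs \<subseteq> S" "b = hev bs y" using b(1) unfolding Pa_def by auto
    have tS: "t [^] Suc K \<in> S" using sr_pow[OF G(1) G(2)] .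
    have "nth0 as i = t [^] Suc K \<otimes> nth0 bs i"
      using trans_coeff[OF G(1) y tr tS as(1) bs(1)] as(2) b(2) bs(2) by blast
    then show False using K nth0_in[OF G(1) bs(1)] by blast
  qed
  have Q0: "Q 0" unfolding Q_def using a PC by (intro bexI[of _ a]) auto
  define k0 where "k0 = (LEAST n. \<not> Q (Suc n))"
  have nQk: "\<not> Q (Suc k0)" unfolding k0_def using LeastI[of "\<lambda>n. \<not> Q (Suc n)", OF nQ] .
  have Qk: "Q k0"
  proof (cases k0)
    case 0 then show ?thesis using Q0 by simp
  next
    case (Suc j)
    then have "j < k0" by simp
    then have "\<not> \<not> Q (Suc j)" unfolding k0_def by (rule not_less_Least)
    then show ?thesis using Suc by simp
  qed
  then obtain a' where a': "a' \<in> Pa S y" "a = t [^] k0 \<otimes> a'" unfolding Q_def by blast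
  have "\<not>(\<exists>b\<in>Pa S y. a' = t \<otimes> b)"
  proof
    assume "\<exists>b\<in>Pa S y. a' = t \<otimes> b"
    then obtain b where b: "b \<in> Pa S y" "a' = t \<otimes> b" by blast
    have bc: "b \<in> carrier R" using b(1) PC by auto
    have "a = t [^] Suc k0 \<otimes> b" using a'(2) b G(6) bc by (simp add: m_assoc)
    then show False using nQk b(1) unfolding Q_def by blast
  qed
  then show ?thesis using a' by blast
qed

lemma trans_ext:
  assumes S: "S \<in> GG t" and y: "y \<in> carrier R" and tr: "transc S y"
  shows "\<exists>S'. S' \<in> GG t \<and> S \<subseteq> S' \<and> S' \<noteq> S"
proof -
  note G = GGD[OF S]
  have PS: "sr (Pa S y)" using Pa_sr[OF G(1) y] .
  have PC: "Pa S y \<subseteq> carrier R" using srD(1)[OF PS] .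
  define NT where "NT = {b \<in> Pa S y. \<not>(\<exists>c\<in>Pa S y. b = t \<otimes> c)}"
  define S' where "S' = {a \<otimes> inv b | a b. a \<in> Pa S y \<and> b \<in> NT}"
  have NT0: "b \<noteq> \<zero>" if "b \<in> NT" for b
  proof
    assume "b = \<zero>"
    then have "b = t \<otimes> \<zero>" using G(6) by simp
    then show False using that sr_zero[OF PS] unfolding NT_def by blast
  qed
  have NTc: "b \<in> carrier R" if "b \<in> NT" for b using that PC unfolding NT_def by auto
  have NTP: "b \<in> Pa S y" if "b \<in> NT" for b using that unfolding NT_def by auto
  have NTm: "b \<otimes> d \<in> NT" if "b \<in> NT" "d \<in> NT" for b d
  proof -
    have bd: "b \<in> Pa S y" "\<not>(\<exists>c\<in>Pa S y. b = t \<otimes> c)" "d \<in> Pa S y" "\<not>(\<exists>c\<in>Pa S y. d = t \<otimes> c)"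
      using that unfolding NT_def by auto
    have "\<not>(\<exists>e\<in>Pa S y. b \<otimes> d = t \<otimes> e)" by (rule gauss[OF S y tr bd])
    moreover have "b \<otimes> d \<in> Pa S y" using bd srD(4)[OF PS] by auto
    ultimately show ?thesis unfolding NT_def by auto
  qed
  have one_NT: "\<one> \<in> NT"
  proof -
    have "\<one> \<in> Pa S y" using srD(2)[OF PS] .
    moreover have "\<not>(\<exists>c\<in>Pa S y. \<one> = t \<otimes> c)"
    proof
      assume "\<exists>c\<in>Pa S y. \<one> = t \<otimes> c"
      then obtain cs where cs: "set cs \<subseteq> S" "\<one> = t \<otimes> hev cs y" unfolding Pa_def by auto
      have "hev [\<one>] y = \<one>" using y by simp
      then have "hev [\<one>] y = t \<otimes> hev cs y" using cs(2) by simp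
      moreover have "set [\<one>] \<subseteq> S" using srD(2)[OF G(1)] by simp
      ultimately have "nth0 [\<one>] 0 = t \<otimes> nth0 cs 0" using trans_coeff[OF G(1) y tr G(2) _ cs(1)] by blast
      then have "\<one> = t \<otimes> nth0 cs 0" by simp
      then show False using G2[OF S unitS_one[OF G(1)] nth0_in[OF G(1) cs(1)]] by blast
    qed
    ultimately show ?thesis unfolding NT_def by blast
  qed
  have inv1: "inv \<one> = \<one>" using finv_eqI[of "\<one>" "\<one>"] by simp
  have base: "a \<in> S'" if "a \<in> Pa S y" for a
    unfolding S'_def using that one_NT inv1 PC by (intro CollectI exI[of _ a] exI[of _ "\<one>"]) auto
  have S'C: "S' \<subseteq> carrier R"
  proof
    fix x assume "x \<in> S'"
    then obtain a b where ab: "a \<in> Pa S y" "b \<in> NT" "x = a \<otimes> inv b" unfolding S'_def by blast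
    have "inv b \<in> carrier R" using finv_closed NTc[OF ab(2)] NT0[OF ab(2)] by auto
    then show "x \<in> carrier R" using ab PC by auto
  qed
  have sr': "sr S'"
    unfolding sr_def
  proof (intro conjI ballI)
    show "S' \<subseteq> carrier R" by (rule S'C)
    show "\<one> \<in> S'" using base srD(2)[OF PS] by blast
  next
    fix p q assume pq: "p \<in> S'" "q \<in> S'"
    then obtain a b c d where abcd: "a \<in> Pa S y" "b \<in> NT" "p = a \<otimes> inv b" "c \<in> Pa S y" "d \<in> NT" "q = c \<otimes> inv d"
      unfolding S'_def by blast
    have cc: "a \<in> carrier R" "b \<in> carrier R" "c \<in> carrier R" "d \<in> carrier R" "b \<noteq> \<zero>" "d \<noteq> \<zero>"
      using abcd PC NTc NT0 by auto
    have ic: "inv b \<in> carrier R" "inv d \<in> carrier R" using finv_closed cc by auto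
    have invbd: "inv (b \<otimes> d) = inv b \<otimes> inv d" using finv_mult cc by auto
    have e1: "(a \<otimes> d \<oplus> c \<otimes> b) \<otimes> (ib \<otimes> id) = a \<otimes> ib \<otimes> (d \<otimes> id) \<oplus> c \<otimes> id \<otimes> (b \<otimes> ib)"
      if "ib \<in> carrier R" "id \<in> carrier R" for ib id using that cc by algebra
    have "p \<oplus> q = (a \<otimes> d \<oplus> c \<otimes> b) \<otimes> inv (b \<otimes> d)"
      using e1[OF ic] invbd abcd(3,6) finv_r cc ic by simp
    moreover have "a \<otimes> d \<oplus> c \<otimes> b \<in> Pa S y" using abcd NTP srD(3,4)[OF PS] by simp
    ultimately show "p \<oplus> q \<in> S'" unfolding S'_def using NTm[OF abcd(2) abcd(5)] by blast
    have e2: "(a \<otimes> c) \<otimes> (ib \<otimes> id) = (a \<otimes> ib) \<otimes> (c \<otimes> id)"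
      if "ib \<in> carrier R" "id \<in> carrier R" for ib id using that cc by algebra
    have "p \<otimes> q = (a \<otimes> c) \<otimes> inv (b \<otimes> d)" using e2[OF ic] invbd abcd(3,6) by simp
    moreover have "a \<otimes> c \<in> Pa S y" using abcd srD(4)[OF PS] by simp
    ultimately show "p \<otimes> q \<in> S'" unfolding S'_def using NTm[OF abcd(2) abcd(5)] by blast
  next
    fix p assume "p \<in> S'"
    then obtain a b where ab: "a \<in> Pa S y" "b \<in> NT" "p = a \<otimes> inv b" unfolding S'_def by blast
    have cc: "a \<in> carrier R" "inv b \<in> carrier R" using ab PC NTc NT0 finv_closed by auto
    have "\<ominus> p = (\<ominus> a) \<otimes> inv b" using ab(3) cc by (simp add: l_minus)
    moreover have "\<ominus> a \<in> Pa S y" using ab srD(5)[OF PS] by simp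
    ultimately show "\<ominus> p \<in> S'" unfolding S'_def using ab(2) by blast
  qed
  have SP: "S \<subseteq> Pa S y" using Pa_base[OF G(1) y] by blast
  have tS': "t \<in> S'" using base SP G(2) by blast
  have itS': "inv t \<notin> S'"
  proof
    assume "inv t \<in> S'"
    then obtain a b where ab: "a \<in> Pa S y" "b \<in> NT" "inv t = a \<otimes> inv b" unfolding S'_def by blast
    have cc: "a \<in> carrier R" "b \<in> carrier R" "b \<noteq> \<zero>" using ab PC NTc NT0 by auto
    have "b = (t \<otimes> inv t) \<otimes> b" using finv_r[OF G(6) G(3)] cc by simp
    also have "\<dots> = t \<otimes> a \<otimes> (inv b \<otimes> b)" using ab(3) cc G(6) finv_closed[OF cc(2,3)] by (simp add: m_ac)
    also have "\<dots> = t \<otimes> a" using finv_l[OF cc(2,3)] cc G(6) by simp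
    finally show False using ab(1,2) unfolding NT_def by blast
  qed
  have dv: "dvrl S' t"
    unfolding dvrl_def
  proof (intro ballI impI)
    fix s assume s: "s \<in> S'" "s \<noteq> \<zero>"
    then obtain a b where ab: "a \<in> Pa S y" "b \<in> NT" "s = a \<otimes> inv b" unfolding S'_def by blast
    have cc: "a \<in> carrier R" "b \<in> carrier R" "b \<noteq> \<zero>" using ab PC NTc NT0 by auto
    have ibc: "inv b \<in> carrier R" "inv b \<noteq> \<zero>" using finv_closed finv_ne cc by auto
    have a0: "a \<noteq> \<zero>" using s(2) ab(3) ibc by auto
    obtain k a' where ka: "a' \<in> Pa S y" "\<not>(\<exists>b\<in>Pa S y. a' = t \<otimes> b)" "a = t [^] (k::nat) \<otimes> a'"
      using factor_t[OF S y tr ab(1) a0] by blast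
    have a'NT: "a' \<in> NT" unfolding NT_def using ka by blast
    have a'c: "a' \<in> carrier R" "a' \<noteq> \<zero>" using NTc NT0 a'NT by auto
    define u where "u = a' \<otimes> inv b"
    have uS: "u \<in> S'" unfolding u_def S'_def using ka(1) ab(2) by blast
    have u0: "u \<noteq> \<zero>" unfolding u_def using fmult_ne a'c ibc by auto
    have "inv u = inv a' \<otimes> inv (inv b)" unfolding u_def using finv_mult a'c ibc by auto
    also have "\<dots> = b \<otimes> inv a'" using finv_inv cc m_comm finv_closed a'c by auto
    finally have "inv u \<in> S'" unfolding S'_def using ab(2) NTP a'NT by blast
    then have "unitS S' u" unfolding unitS_def using uS u0 by simp
    moreover have "s = t [^] k \<otimes> u" unfolding u_def using ab(3) ka(3) a'c ibc G(6) by (simp add: m_assoc)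
    ultimately show "\<exists>k::nat. \<exists>u. unitS S' u \<and> s = t [^] k \<otimes> u" by blast
  qed
  have inG: "S' \<in> GG t" unfolding GG_def using sr' tS' G(3) itS' dv by blast
  have sub: "S \<subseteq> S'" using base SP by blast
  have yS': "y \<in> S'" using base Pa_var[OF G(1) y] by blast
  have yS: "y \<notin> S"
  proof
    assume yS: "y \<in> S"
    have l: "set [\<ominus> y, \<one>] \<subseteq> S" using yS srD(2,5)[OF G(1)] by simp
    have "hev [\<ominus> y, \<one>] y = \<zero>" using y by (simp add: l_neg)
    then have "set [\<ominus> y, \<one>] \<subseteq> {\<zero>}" using tr l unfolding transc_def by blast
    then show False by simp
  qed
  show ?thesis using inG sub yS' yS by blast
qed

end


context field
begin

lemma powR:
  assumes S: "sr S" and t: "t \<in> S" and y: "y \<in> carrier R"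
  shows "set cs \<subseteq> S \<Longrightarrow> length cs \<le> Suc m \<Longrightarrow>
    \<exists>es. set es \<subseteq> S \<and> length es \<le> length cs \<and> t [^] (k * m) \<otimes> hev cs y = hev es (t [^] k \<otimes> y)"
proof (induction cs arbitrary: m)
  case Nil
  have "t \<in> carrier R" using sr_carr[OF S t] .
  then show ?case by (intro exI[of _ "[]"]) simp
next
  case (Cons c cs)
  have tc: "t \<in> carrier R" using sr_carr[OF S t] .
  have cS: "c \<in> S" "set cs \<subseteq> S" using Cons.prems by auto
  have cc: "c \<in> carrier R" using sr_carr[OF S cS(1)] .
  have hc: "hev cs y \<in> carrier R" using hev_closed cS(2) srD(1)[OF S] y by blast
  show ?case
  proof (cases m)
    case 0
    then have "cs = []" using Cons.prems by simp
    then show ?thesis using 0 cc cS y tc by (intro exI[of _ "[c]"]) simp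
  next
    case (Suc m')
    have "\<exists>es'. set es' \<subseteq> S \<and> length es' \<le> length cs \<and> t [^] (k * m') \<otimes> hev cs y = hev es' (t [^] k \<otimes> y)"
      using Cons.IH[OF cS(2), of m'] Cons.prems Suc by simp
    then obtain es' where es': "set es' \<subseteq> S" "length es' \<le> length cs" "t [^] (k * m') \<otimes> hev cs y = hev es' (t [^] k \<otimes> y)"
      by blast
    have pw: "t [^] (k * m) = t [^] k \<otimes> t [^] (k * m')" using Suc tc by (simp add: nat_pow_mult)
    have e: "(P \<otimes> Q) \<otimes> (c \<oplus> y \<otimes> hev cs y) = (P \<otimes> Q) \<otimes> c \<oplus> (P \<otimes> y) \<otimes> (Q \<otimes> hev cs y)"
      if "P \<in> carrier R" "Q \<in> carrier R" for P Q using that cc y hc by algebra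
    have "t [^] (k * m) \<otimes> hev (c # cs) y = t [^] (k * m) \<otimes> c \<oplus> (t [^] k \<otimes> y) \<otimes> hev es' (t [^] k \<otimes> y)"
      using e[of "t [^] k" "t [^] (k * m')"] pw es'(3) tc by simp
    also have "\<dots> = hev ((t [^] (k * m) \<otimes> c) # es') (t [^] k \<otimes> y)" by simp
    finally show ?thesis
      using es' sr_pow[OF S t] cS srD(4)[OF S] by (intro exI[of _ "(t [^] (k * m) \<otimes> c) # es'"]) auto
  qed
qed

lemma alg_integral:
  assumes S: "S \<in> GG t" and y: "y \<in> carrier R" and ntr: "\<not> transc S y"
  shows "\<exists>k n es. set es \<subseteq> S \<and> length es \<le> n \<and> (t [^] (k::nat) \<otimes> y) [^] (n::nat) = hev es (t [^] k \<otimes> y)"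
proof -
  note G = GGD[OF S]
  obtain cs where cs: "set cs \<subseteq> S" "hev cs y = \<zero>" "\<not> set cs \<subseteq> {\<zero>}" using ntr unfolding transc_def by blast
  then have "\<exists>x\<in>set cs. x \<noteq> \<zero>" by blast
  then obtain cs0 c zs where dec: "cs = cs0 @ c # zs" "c \<noteq> \<zero>" "\<forall>z\<in>set zs. \<not> z \<noteq> \<zero>"
    using split_list_last_prop[of cs "\<lambda>x. x \<noteq> \<zero>"] by blast
  have zs0: "hev zs y = \<zero>" using dec(3) hev_zeros[of zs y] y by auto
  have cS: "c \<in> S" "set cs0 \<subseteq> S" "set zs \<subseteq> S" using cs(1) dec(1) by auto
  have cc: "c \<in> carrier R" using cS G(7) by auto
  have SC: "S \<subseteq> carrier R" using G(7) .
  define N where "N = length cs0"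
  have h0: "hev cs0 y \<oplus> y [^] N \<otimes> c = \<zero>"
  proof -
    have "hev cs y = hev cs0 y \<oplus> y [^] N \<otimes> hev (c # zs) y"
      unfolding N_def using hev_append[of cs0 "c # zs" y] dec(1) cS SC y by auto
    then show ?thesis using cs(2) zs0 cc y by simp
  qed
  obtain k u where ku: "unitS S u" "c = t [^] (k::nat) \<otimes> u" using G(5) cS(1) dec(2) unfolding dvrl_def by blast
  have uc: "u \<in> carrier R" "u \<noteq> \<zero>" "inv u \<in> S" using unitS_carr[OF G(1) ku(1)] ku(1) unfolding unitS_def by auto
  have iuc: "inv u \<in> carrier R" using uc(3) SC by auto
  have "N \<noteq> 0"
  proof
    assume "N = 0"
    then have "cs0 = []" unfolding N_def by simp
    then show False using h0 \<open>N = 0\<close> cc dec(2) by simp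
  qed
  then obtain M where NM: "N = Suc M" by (cases N) auto
  obtain es where es: "set es \<subseteq> S" "length es \<le> length cs0" "t [^] (k * M) \<otimes> hev cs0 y = hev es (t [^] k \<otimes> y)"
    using powR[OF G(1) G(2) y cS(2), of M k] NM N_def by auto
  define z where "z = t [^] k \<otimes> y"
  have tc: "t \<in> carrier R" using G(6) .
  have A: "hev cs0 y \<in> carrier R" using hev_closed cS(2) SC y by blast
  have zN: "z [^] N = t [^] (k * M) \<otimes> t [^] k \<otimes> y [^] N"
  proof -
    have "z [^] N = (t [^] k) [^] N \<otimes> y [^] N" unfolding z_def using nat_pow_distrib tc y by simp
    also have "(t [^] k) [^] N = t [^] (k * N)" using nat_pow_pow tc by simp
    also have "t [^] (k * N) = t [^] (k * M) \<otimes> t [^] k" using NM tc nat_pow_mult[of t "k * M" k]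
      by (simp add: add.commute)
    finally show ?thesis .
  qed
  have ident: "iu \<otimes> T \<otimes> (Aa \<oplus> YY \<otimes> (P \<otimes> u)) = iu \<otimes> (T \<otimes> Aa) \<oplus> (T \<otimes> P \<otimes> YY) \<otimes> (iu \<otimes> u)"
    if "iu \<in> carrier R" "T \<in> carrier R" "Aa \<in> carrier R" "YY \<in> carrier R" "P \<in> carrier R" for iu T Aa YY P
    using that uc(1) by algebra
  have "\<zero> = inv u \<otimes> (t [^] (k * M) \<otimes> hev cs0 y) \<oplus> z [^] N"
  proof -
    have "\<zero> = inv u \<otimes> t [^] (k * M) \<otimes> (hev cs0 y \<oplus> y [^] N \<otimes> (t [^] k \<otimes> u))"
      using h0 ku(2) iuc tc by simp
    also have "\<dots> = inv u \<otimes> (t [^] (k * M) \<otimes> hev cs0 y) \<oplus> (t [^] (k * M) \<otimes> t [^] k \<otimes> y [^] N) \<otimes> (inv u \<otimes> u)"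
      using ident[of "inv u" "t [^] (k * M)" "hev cs0 y" "y [^] N" "t [^] k"] iuc tc A y by simp
    also have "\<dots> = inv u \<otimes> (t [^] (k * M) \<otimes> hev cs0 y) \<oplus> z [^] N"
      using zN finv_l[OF uc(1,2)] tc y by simp
    finally show ?thesis .
  qed
  then have "z [^] N = \<ominus> (inv u \<otimes> hev es z)"
    using es(3) z_def iuc minus_equality[of "z [^] N" "inv u \<otimes> hev es z"] hev_closed[of es z] es(1) SC tc y
    by (simp add: a_comm)
  also have "\<dots> = (\<ominus> (inv u)) \<otimes> hev es z" using iuc hev_closed[of es z] es(1) SC tc y z_def by (simp add: l_minus)
  also have "\<dots> = hev (map ((\<otimes>) (\<ominus> (inv u))) es) z" using hev_map_mult[of "\<ominus> (inv u)" es z] iuc es(1) SC tc y z_def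
    by auto
  finally have fin: "z [^] N = hev (map ((\<otimes>) (\<ominus> (inv u))) es) z" .
  have "set (map ((\<otimes>) (\<ominus> (inv u))) es) \<subseteq> S" using es(1) uc(3) srD(4,5)[OF G(1)] by auto
  moreover have "length (map ((\<otimes>) (\<ominus> (inv u))) es) \<le> N" using es(2) N_def by simp
  ultimately show ?thesis using fin unfolding z_def by blast
qed

lemma sr_chain_Union:
  assumes C: "C \<noteq> {}" "\<forall>XX\<in>C. sr XX" "\<forall>XX\<in>C. \<forall>YY\<in>C. XX \<subseteq> YY \<or> YY \<subseteq> XX"
  shows "sr (\<Union>C)"
  unfolding sr_def
proof (intro conjI ballI)
  show "\<Union>C \<subseteq> carrier R"
  proof
    fix x assume "x \<in> \<Union>C"
    then obtain Z where Z: "Z \<in> C" "x \<in> Z" by blast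
    then show "x \<in> carrier R" using srD(1)[of Z] C(2) by blast
  qed
  obtain Z where Z: "Z \<in> C" using C(1) by blast
  then show "\<one> \<in> \<Union>C" using srD(2)[of Z] C(2) by blast
next
  fix a b assume ab: "a \<in> \<Union>C" "b \<in> \<Union>C"
  then obtain XX YY where XY: "XX \<in> C" "YY \<in> C" "a \<in> XX" "b \<in> YY" by blast
  have "\<exists>Z\<in>C. a \<in> Z \<and> b \<in> Z"
  proof (cases "XX \<subseteq> YY")
    case True then show ?thesis using XY by blast
  next
    case False then have "YY \<subseteq> XX" using C(3) XY(1,2) by blast
    then show ?thesis using XY by blast
  qed
  then obtain Z where Z: "Z \<in> C" "a \<in> Z" "b \<in> Z" by blast
  have sZ: "sr Z" using C(2) Z(1) by blast
  show "a \<oplus> b \<in> \<Union>C" using srD(3)[OF sZ Z(2,3)] Z(1) by blast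
  show "a \<otimes> b \<in> \<Union>C" using srD(4)[OF sZ Z(2,3)] Z(1) by blast
next
  fix a assume "a \<in> \<Union>C"
  then obtain Z where Z: "Z \<in> C" "a \<in> Z" by blast
  have sZ: "sr Z" using C(2) Z(1) by blast
  show "\<ominus> a \<in> \<Union>C" using srD(5)[OF sZ Z(2)] Z(1) by blast
qed

theorem field_main:
  assumes S0: "S0 \<in> GG t"
  shows "\<exists>V. sr V \<and> t \<in> V \<and> inv t \<notin> V \<and> (\<forall>y\<in>carrier R. \<exists>k::nat. t [^] k \<otimes> y \<in> V)"
proof -
  have "\<exists>S\<in>GG t. \<forall>XX\<in>GG t. S \<subseteq> XX \<longrightarrow> XX = S"
  proof (rule subset_Zorn_nonempty)
    show "GG t \<noteq> {}" using S0 by blast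
  next
    fix C assume C: "C \<noteq> {}" "subset.chain (GG t) C"
    then have CG: "C \<subseteq> GG t" and comp: "\<forall>XX\<in>C. \<forall>YY\<in>C. XX \<subseteq> YY \<or> YY \<subseteq> XX"
      by (auto simp: subset_chain_def)
    have srC: "\<forall>XX\<in>C. sr XX" using CG unfolding GG_def by auto
    have 1: "sr (\<Union>C)" using sr_chain_Union[OF C(1) srC comp] .
    obtain Z where Z: "Z \<in> C" using C(1) by blast
    have 2: "t \<in> \<Union>C" using GGD(2)[of Z t] Z CG by blast
    have 3: "inv t \<notin> \<Union>C"
    proof
      assume "inv t \<in> \<Union>C"
      then obtain Z' where "Z' \<in> C" "inv t \<in> Z'" by blast
      then show False using GGD(4)[of Z' t] CG by blast
    qed
    have 4: "t \<noteq> \<zero>" using GGD(3)[OF S0] .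
    have 5: "dvrl (\<Union>C) t"
      unfolding dvrl_def
    proof (intro ballI impI)
      fix s assume s: "s \<in> \<Union>C" "s \<noteq> \<zero>"
      then obtain XX where XX: "XX \<in> C" "s \<in> XX" by blast
      then have "dvrl XX t" using GGD(5)[of XX t] CG by blast
      then obtain k u where "unitS XX u" "s = t [^] (k::nat) \<otimes> u" using XX s(2) unfolding dvrl_def by blast
      moreover have "unitS (\<Union>C) u" using calculation(1) XX(1) unfolding unitS_def by blast
      ultimately show "\<exists>k::nat. \<exists>u. unitS (\<Union>C) u \<and> s = t [^] k \<otimes> u" by blast
    qed
    show "\<Union>C \<in> GG t" unfolding GG_def using 1 2 3 4 5 by simp
  qed
  then obtain S where S: "S \<in> GG t" and Smax: "\<forall>XX\<in>GG t. S \<subseteq> XX \<longrightarrow> XX = S" by blast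
  note G = GGD[OF S]
  define H where "H = {W. sr W \<and> S \<subseteq> W \<and> inv t \<notin> W}"
  have "\<exists>V\<in>H. \<forall>XX\<in>H. V \<subseteq> XX \<longrightarrow> XX = V"
  proof (rule subset_Zorn_nonempty)
    show "H \<noteq> {}" unfolding H_def using G by blast
  next
    fix C assume C: "C \<noteq> {}" "subset.chain H C"
    then have CG: "C \<subseteq> H" and comp: "\<forall>XX\<in>C. \<forall>YY\<in>C. XX \<subseteq> YY \<or> YY \<subseteq> XX"
      by (auto simp: subset_chain_def)
    have srC: "\<forall>XX\<in>C. sr XX" using CG unfolding H_def by auto
    have 1: "sr (\<Union>C)" using sr_chain_Union[OF C(1) srC comp] .
    show "\<Union>C \<in> H" unfolding H_def using 1 C(1) CG unfolding H_def by blast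
  qed
  then obtain V where V: "V \<in> H" and Vmax: "\<forall>XX\<in>H. V \<subseteq> XX \<longrightarrow> XX = V" by blast
  have VV: "sr V" "S \<subseteq> V" "inv t \<notin> V" using V unfolding H_def by auto
  have c: "conchK V t" unfolding conchK_def
  proof (intro conjI allI impI)
    show "sr V" "t \<in> V" "t \<noteq> \<zero>" "inv t \<notin> V" using VV G by auto
  next
    fix W assume W: "sr W \<and> V \<subseteq> W \<and> inv t \<notin> W"
    then have "W \<in> H" unfolding H_def using VV by auto
    then show "W = V" using Vmax W by blast
  qed
  have "\<forall>y\<in>carrier R. \<exists>k::nat. t [^] k \<otimes> y \<in> V"
  proof
    fix y assume y: "y \<in> carrier R"
    show "\<exists>k::nat. t [^] k \<otimes> y \<in> V"
    proof (cases "transc S y")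
      case True
      then obtain S' where "S' \<in> GG t" "S \<subseteq> S'" "S' \<noteq> S" using trans_ext[OF S y] by blast
      then show ?thesis using Smax by blast
    next
      case False
      then obtain k n es where kne: "set es \<subseteq> S" "length es \<le> n" "(t [^] (k::nat) \<otimes> y) [^] (n::nat) = hev es (t [^] k \<otimes> y)"
        using alg_integral[OF S y] by blast
      have "t [^] k \<otimes> y \<in> carrier R" using G(6) y by simp
      then have "t [^] k \<otimes> y \<in> V" using conch_integral[OF c _ _ kne(2) kne(3)] kne(1) VV(2) by blast
      then show ?thesis by blast
    qed
  qed
  then show ?thesis using VV G by blast
qed

end


definition pid :: "'a::comm_ring_1 set \<Rightarrow> bool" where
  "pid Q \<longleftrightarrow> 0 \<in> Q \<and> (\<forall>x\<in>Q. \<forall>y\<in>Q. x + y \<in> Q) \<and> (\<forall>x\<in>Q. \<forall>r. r * x \<in> Q) \<and> 1 \<notin> Q \<and>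
     (\<forall>a b. a * b \<in> Q \<longrightarrow> a \<in> Q \<or> b \<in> Q)"

lemma pidD: assumes "pid Q"
  shows "0 \<in> Q" "\<And>x y. x \<in> Q \<Longrightarrow> y \<in> Q \<Longrightarrow> x + y \<in> Q" "\<And>x r. x \<in> Q \<Longrightarrow> r * x \<in> Q" "1 \<notin> Q"
    "\<And>a b. a * b \<in> Q \<Longrightarrow> a \<in> Q \<or> b \<in> Q"
  using assms unfolding pid_def by auto

lemma pid_multr: "pid Q \<Longrightarrow> x \<in> Q \<Longrightarrow> x * r \<in> Q"
  using pidD(3) by (metis mult.commute)

lemma pid_neg: "pid Q \<Longrightarrow> x \<in> Q \<Longrightarrow> - x \<in> Q"
  using pidD(3)[of Q x "-1"] by simp

lemma pid_diff: "pid Q \<Longrightarrow> x \<in> Q \<Longrightarrow> y \<in> Q \<Longrightarrow> x - y \<in> Q"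
  using pidD(2) pid_neg by (metis diff_conv_add_uminus)

lemma pid_nmul: "pid Q \<Longrightarrow> a \<notin> Q \<Longrightarrow> b \<notin> Q \<Longrightarrow> a * b \<notin> Q"
  using pidD(5) by blast

definition fr :: "'a::comm_ring_1 set \<Rightarrow> 'a \<Rightarrow> 'a \<Rightarrow> ('a \<times> 'a) set" where
  "fr Q a b = {(c, d). d \<notin> Q \<and> a * d - c * b \<in> Q}"

lemma fr_eq:
  assumes Q: "pid Q" and b: "b \<notin> Q" and d: "d \<notin> Q"
  shows "fr Q a b = fr Q c d \<longleftrightarrow> a * d - c * b \<in> Q"
proof
  assume "fr Q a b = fr Q c d"
  moreover have "(c, d) \<in> fr Q c d" unfolding fr_def using d pidD(1)[OF Q] by simp
  ultimately show "a * d - c * b \<in> Q" unfolding fr_def by auto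
next
  assume h: "a * d - c * b \<in> Q"
  have tr: "x * f - e * z \<in> Q"
    if "z \<notin> Q" "y \<notin> Q" "f \<notin> Q" "x * y - w * z \<in> Q" "w * f - e * y \<in> Q"
    for x z w y e f
  proof -
    have "y * (x * f - e * z) = f * (x * y - w * z) + z * (w * f - e * y)" by (simp add: algebra_simps)
    moreover have "f * (x * y - w * z) + z * (w * f - e * y) \<in> Q"
      using that pidD(2,3)[OF Q] by blast
    ultimately have "y * (x * f - e * z) \<in> Q" by simp
    then show ?thesis using pidD(5)[OF Q] that(2) by blast
  qed
  have h': "c * b - a * d \<in> Q" using pid_neg[OF Q h] by (simp add: minus_diff_eq)
  show "fr Q a b = fr Q c d"
  proof (rule Set.set_eqI)
    fix p :: "'a \<times> 'a"
    obtain e f where p: "p = (e, f)" by (cases p)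
    show "p \<in> fr Q a b \<longleftrightarrow> p \<in> fr Q c d" unfolding p
    proof
      assume "(e, f) \<in> fr Q a b"
      then have f: "f \<notin> Q" "a * f - e * b \<in> Q" unfolding fr_def by auto
      have "c * f - e * d \<in> Q" using tr[of d b f c a e] h' b d f by blast
      then show "(e, f) \<in> fr Q c d" unfolding fr_def using f by simp
    next
      assume "(e, f) \<in> fr Q c d"
      then have f: "f \<notin> Q" "c * f - e * d \<in> Q" unfolding fr_def by auto
      have "a * f - e * b \<in> Q" using tr[of b d f a c e] h f b d by blast
      then show "(e, f) \<in> fr Q a b" unfolding fr_def using f by simp
    qed
  qed
qed

definition Kc :: "'a::comm_ring_1 set \<Rightarrow> ('a \<times> 'a) set set" where
  "Kc Q = {fr Q a b | a b. b \<notin> Q}"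

definition rep :: "'a::comm_ring_1 set \<Rightarrow> ('a \<times> 'a) set \<Rightarrow> 'a \<times> 'a" where
  "rep Q X = (SOME p. snd p \<notin> Q \<and> X = fr Q (fst p) (snd p))"

lemma rep: assumes "X \<in> Kc Q" shows "snd (rep Q X) \<notin> Q" "X = fr Q (fst (rep Q X)) (snd (rep Q X))"
proof -
  obtain a b where "b \<notin> Q" "X = fr Q a b" using assms unfolding Kc_def by blast
  then have "\<exists>p. snd p \<notin> Q \<and> X = fr Q (fst p) (snd p)" by (intro exI[of _ "(a, b)"]) simp
  then have "snd (rep Q X) \<notin> Q \<and> X = fr Q (fst (rep Q X)) (snd (rep Q X))"
    unfolding rep_def by (rule someI_ex)
  then show "snd (rep Q X) \<notin> Q" "X = fr Q (fst (rep Q X)) (snd (rep Q X))" by auto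
qed

definition kadd :: "'a::comm_ring_1 set \<Rightarrow> ('a \<times> 'a) set \<Rightarrow> ('a \<times> 'a) set \<Rightarrow> ('a \<times> 'a) set" where
  "kadd Q X Y = fr Q (fst (rep Q X) * snd (rep Q Y) + fst (rep Q Y) * snd (rep Q X)) (snd (rep Q X) * snd (rep Q Y))"

definition kmul :: "'a::comm_ring_1 set \<Rightarrow> ('a \<times> 'a) set \<Rightarrow> ('a \<times> 'a) set \<Rightarrow> ('a \<times> 'a) set" where
  "kmul Q X Y = fr Q (fst (rep Q X) * fst (rep Q Y)) (snd (rep Q X) * snd (rep Q Y))"

lemma fr_in: "b \<notin> Q \<Longrightarrow> fr Q a b \<in> Kc Q"
  unfolding Kc_def by blast

lemma rep_fr:
  assumes Q: "pid Q" and b: "b \<notin> Q"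
  shows "snd (rep Q (fr Q a b)) \<notin> Q" "fst (rep Q (fr Q a b)) * b - a * snd (rep Q (fr Q a b)) \<in> Q"
proof -
  have X: "fr Q a b \<in> Kc Q" using fr_in b .
  show "snd (rep Q (fr Q a b)) \<notin> Q" using rep(1)[OF X] .
  have "fr Q (fst (rep Q (fr Q a b))) (snd (rep Q (fr Q a b))) = fr Q a b" using rep(2)[OF X] by simp
  then show "fst (rep Q (fr Q a b)) * b - a * snd (rep Q (fr Q a b)) \<in> Q"
    using fr_eq[OF Q rep(1)[OF X] b] by simp
qed

lemma kadd_fr:
  assumes Q: "pid Q" and b: "b \<notin> Q" and d: "d \<notin> Q"
  shows "kadd Q (fr Q a b) (fr Q c d) = fr Q (a * d + c * b) (b * d)"
proof -
  define a' where "a' = fst (rep Q (fr Q a b))"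
  define b' where "b' = snd (rep Q (fr Q a b))"
  define c' where "c' = fst (rep Q (fr Q c d))"
  define d' where "d' = snd (rep Q (fr Q c d))"
  have r1: "b' \<notin> Q" "a' * b - a * b' \<in> Q" using rep_fr[OF Q b] unfolding a'_def b'_def by auto
  have r2: "d' \<notin> Q" "c' * d - c * d' \<in> Q" using rep_fr[OF Q d] unfolding c'_def d'_def by auto
  have "(a' * d' + c' * b') * (b * d) - (a * d + c * b) * (b' * d') =
        (d * d') * (a' * b - a * b') + (b * b') * (c' * d - c * d')" by (simp add: algebra_simps)
  also have "\<dots> \<in> Q" using r1 r2 pidD(2,3)[OF Q] by blast
  finally have "fr Q (a' * d' + c' * b') (b' * d') = fr Q (a * d + c * b) (b * d)"
    using fr_eq[OF Q pid_nmul[OF Q r1(1) r2(1)] pid_nmul[OF Q b d]] by blast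
  then show ?thesis unfolding kadd_def a'_def b'_def c'_def d'_def .
qed

lemma kmul_fr:
  assumes Q: "pid Q" and b: "b \<notin> Q" and d: "d \<notin> Q"
  shows "kmul Q (fr Q a b) (fr Q c d) = fr Q (a * c) (b * d)"
proof -
  define a' where "a' = fst (rep Q (fr Q a b))"
  define b' where "b' = snd (rep Q (fr Q a b))"
  define c' where "c' = fst (rep Q (fr Q c d))"
  define d' where "d' = snd (rep Q (fr Q c d))"
  have r1: "b' \<notin> Q" "a' * b - a * b' \<in> Q" using rep_fr[OF Q b] unfolding a'_def b'_def by auto
  have r2: "d' \<notin> Q" "c' * d - c * d' \<in> Q" using rep_fr[OF Q d] unfolding c'_def d'_def by auto
  have "(a' * c') * (b * d) - (a * c) * (b' * d') =
        (c' * d) * (a' * b - a * b') + (a * b') * (c' * d - c * d')" by (simp add: algebra_simps)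
  also have "\<dots> \<in> Q" using r1 r2 pidD(2,3)[OF Q] by blast
  finally have "fr Q (a' * c') (b' * d') = fr Q (a * c) (b * d)"
    using fr_eq[OF Q pid_nmul[OF Q r1(1) r2(1)] pid_nmul[OF Q b d]] by blast
  then show ?thesis unfolding kmul_def a'_def b'_def c'_def d'_def .
qed

definition KK :: "'a::comm_ring_1 set \<Rightarrow> ('a \<times> 'a) set ring" where
  "KK Q = \<lparr>carrier = Kc Q, mult = kmul Q, one = fr Q 1 1, zero = fr Q 0 1, add = kadd Q\<rparr>"

lemma KK_simps: "carrier (KK Q) = Kc Q" "mult (KK Q) = kmul Q" "one (KK Q) = fr Q 1 1"
  "zero (KK Q) = fr Q 0 1" "add (KK Q) = kadd Q"
  unfolding KK_def by simp_all

lemma KcE: assumes "X \<in> Kc Q" obtains a b where "b \<notin> Q" "X = fr Q a b"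
  using assms unfolding Kc_def by blast

lemma fr_cong: "a = c \<Longrightarrow> b = d \<Longrightarrow> fr Q a b = fr Q c d" by simp

lemma KK_cring: assumes Q: "pid Q" shows "cring (KK Q)"
proof (rule cringI)
  have o: "(1::'a) \<notin> Q" using pidD(4)[OF Q] .
  show "abelian_group (KK Q)"
  proof (rule abelian_groupI, unfold KK_simps)
    fix X Y assume "X \<in> Kc Q" "Y \<in> Kc Q"
    then obtain a b c d where "b \<notin> Q" "X = fr Q a b" "d \<notin> Q" "Y = fr Q c d" by (metis KcE)
    then show "kadd Q X Y \<in> Kc Q" using kadd_fr[OF Q] fr_in pid_nmul[OF Q] by metis
  next
    show "fr Q 0 1 \<in> Kc Q" using fr_in o by blast
  next
    fix X Y Z assume "X \<in> Kc Q" "Y \<in> Kc Q" "Z \<in> Kc Q"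
    then obtain a b c d e f where h: "b \<notin> Q" "X = fr Q a b" "d \<notin> Q" "Y = fr Q c d" "f \<notin> Q" "Z = fr Q e f"
      by (metis KcE)
    have "kadd Q (kadd Q X Y) Z = fr Q ((a * d + c * b) * f + e * (b * d)) (b * d * f)"
      using h kadd_fr[OF Q] pid_nmul[OF Q] by simp
    also have "\<dots> = fr Q (a * (d * f) + (c * f + e * d) * b) (b * (d * f))"
      by (rule fr_cong) (simp_all add: algebra_simps)
    also have "\<dots> = kadd Q X (kadd Q Y Z)" using h kadd_fr[OF Q] pid_nmul[OF Q] by simp
    finally show "kadd Q (kadd Q X Y) Z = kadd Q X (kadd Q Y Z)" .
  next
    fix X Y assume "X \<in> Kc Q" "Y \<in> Kc Q"
    then obtain a b c d where h: "b \<notin> Q" "X = fr Q a b" "d \<notin> Q" "Y = fr Q c d" by (metis KcE)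
    have "kadd Q X Y = fr Q (a * d + c * b) (b * d)" using h kadd_fr[OF Q] by simp
    also have "\<dots> = fr Q (c * b + a * d) (d * b)" by (rule fr_cong) (simp_all add: algebra_simps)
    also have "\<dots> = kadd Q Y X" using h kadd_fr[OF Q] by simp
    finally show "kadd Q X Y = kadd Q Y X" .
  next
    fix X assume "X \<in> Kc Q"
    then obtain a b where h: "b \<notin> Q" "X = fr Q a b" by (metis KcE)
    then show "kadd Q (fr Q 0 1) X = X" using kadd_fr[OF Q o h(1)] by simp
  next
    fix X assume "X \<in> Kc Q"
    then obtain a b where h: "b \<notin> Q" "X = fr Q a b" by (metis KcE)
    have "kadd Q (fr Q (- a) b) X = fr Q (- a * b + a * b) (b * b)" using kadd_fr[OF Q h(1) h(1)] h by simp
    also have "\<dots> = fr Q 0 1" using fr_eq[OF Q pid_nmul[OF Q h(1) h(1)] o] pidD(1)[OF Q] by simp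
    finally show "\<exists>y\<in>Kc Q. kadd Q y X = fr Q 0 1" using fr_in[OF h(1)] by blast
  qed
next
  have o: "(1::'a) \<notin> Q" using pidD(4)[OF Q] .
  show "comm_monoid (KK Q)"
  proof (rule comm_monoidI, unfold KK_simps)
    fix X Y assume "X \<in> Kc Q" "Y \<in> Kc Q"
    then obtain a b c d where "b \<notin> Q" "X = fr Q a b" "d \<notin> Q" "Y = fr Q c d" by (metis KcE)
    then show "kmul Q X Y \<in> Kc Q" using kmul_fr[OF Q] fr_in pid_nmul[OF Q] by metis
  next
    show "fr Q 1 1 \<in> Kc Q" using fr_in o by blast
  next
    fix X Y Z assume "X \<in> Kc Q" "Y \<in> Kc Q" "Z \<in> Kc Q"
    then obtain a b c d e f where h: "b \<notin> Q" "X = fr Q a b" "d \<notin> Q" "Y = fr Q c d" "f \<notin> Q" "Z = fr Q e f"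
      by (metis KcE)
    have "kmul Q (kmul Q X Y) Z = fr Q (a * c * e) (b * d * f)"
      using h kmul_fr[OF Q] pid_nmul[OF Q] by simp
    also have "\<dots> = fr Q (a * (c * e)) (b * (d * f))"
      by (rule fr_cong) (simp_all add: algebra_simps)
    also have "\<dots> = kmul Q X (kmul Q Y Z)" using h kmul_fr[OF Q] pid_nmul[OF Q] by simp
    finally show "kmul Q (kmul Q X Y) Z = kmul Q X (kmul Q Y Z)" .
  next
    fix X assume "X \<in> Kc Q"
    then obtain a b where h: "b \<notin> Q" "X = fr Q a b" by (metis KcE)
    then show "kmul Q (fr Q 1 1) X = X" using kmul_fr[OF Q o h(1)] by simp
  next
    fix X Y assume "X \<in> Kc Q" "Y \<in> Kc Q"
    then obtain a b c d where h: "b \<notin> Q" "X = fr Q a b" "d \<notin> Q" "Y = fr Q c d" by (metis KcE)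
    have "kmul Q X Y = fr Q (a * c) (b * d)" using h kmul_fr[OF Q] by simp
    also have "\<dots> = fr Q (c * a) (d * b)" by (rule fr_cong) (simp_all add: algebra_simps)
    also have "\<dots> = kmul Q Y X" using h kmul_fr[OF Q] by simp
    finally show "kmul Q X Y = kmul Q Y X" .
  qed
next
  fix X Y Z assume "X \<in> carrier (KK Q)" "Y \<in> carrier (KK Q)" "Z \<in> carrier (KK Q)"
  then obtain a b c d e f where h: "b \<notin> Q" "X = fr Q a b" "d \<notin> Q" "Y = fr Q c d" "f \<notin> Q" "Z = fr Q e f"
    unfolding KK_simps by (metis KcE)
  have n: "b * d \<notin> Q" "b * f \<notin> Q" "d * f \<notin> Q" "b * d * f \<notin> Q" "b * f * (d * f) \<notin> Q"
    using h pid_nmul[OF Q] by metis+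
  have "kmul Q (kadd Q X Y) Z = fr Q ((a * d + c * b) * e) (b * d * f)"
    using h kadd_fr[OF Q] kmul_fr[OF Q] n by simp
  also have "\<dots> = fr Q (a * e * (d * f) + c * e * (b * f)) (b * f * (d * f))"
  proof -
    have "((a * d + c * b) * e) * (b * f * (d * f)) - (a * e * (d * f) + c * e * (b * f)) * (b * d * f) = 0"
      by (simp add: algebra_simps)
    then show ?thesis using fr_eq[OF Q n(4) n(5)] pidD(1)[OF Q] by simp
  qed
  also have "\<dots> = kadd Q (kmul Q X Z) (kmul Q Y Z)" using h kadd_fr[OF Q] kmul_fr[OF Q] n by simp
  finally have eq: "kmul Q (kadd Q X Y) Z = kadd Q (kmul Q X Z) (kmul Q Y Z)" .
  show "(X \<oplus>\<^bsub>KK Q\<^esub> Y) \<otimes>\<^bsub>KK Q\<^esub> Z = X \<otimes>\<^bsub>KK Q\<^esub> Z \<oplus>\<^bsub>KK Q\<^esub> Y \<otimes>\<^bsub>KK Q\<^esub> Z"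
    unfolding KK_simps by (rule eq)
qed


lemma fr_zero_iff: "pid Q \<Longrightarrow> b \<notin> Q \<Longrightarrow> fr Q a b = fr Q 0 1 \<longleftrightarrow> a \<in> Q"
  using fr_eq[of Q b 1 a 0] pidD(4)[of Q] by simp

lemma KK_field: assumes Q: "pid Q" shows "field (KK Q)"
proof (rule cring.cring_fieldI[OF KK_cring[OF Q]])
  have o: "(1::'a) \<notin> Q" using pidD(4)[OF Q] .
  show "Units (KK Q) = carrier (KK Q) - {\<zero>\<^bsub>KK Q\<^esub>}"
  proof
    show "Units (KK Q) \<subseteq> carrier (KK Q) - {\<zero>\<^bsub>KK Q\<^esub>}"
    proof
      fix Y assume Y: "Y \<in> Units (KK Q)"
      then have Yc: "Y \<in> Kc Q" and ex: "\<exists>X\<in>Kc Q. kmul Q X Y = fr Q 1 1" unfolding Units_def KK_simps by auto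
      obtain a b where ab: "b \<notin> Q" "Y = fr Q a b" using Yc by (metis KcE)
      obtain X where X: "X \<in> Kc Q" "kmul Q X Y = fr Q 1 1" using ex by blast
      obtain c d where cd: "d \<notin> Q" "X = fr Q c d" using X(1) by (metis KcE)
      have "Y \<noteq> fr Q 0 1"
      proof
        assume "Y = fr Q 0 1"
        then have "a \<in> Q" using fr_zero_iff[OF Q ab(1)] ab(2) by simp
        then have "c * a \<in> Q" using pidD(3)[OF Q] by blast
        moreover have "kmul Q X Y = fr Q (c * a) (d * b)" using kmul_fr[OF Q cd(1) ab(1)] cd ab by simp
        ultimately have "fr Q 1 1 = fr Q 0 1" using X(2) fr_zero_iff[OF Q pid_nmul[OF Q cd(1) ab(1)]] by simp
        then show False using fr_zero_iff[OF Q o] o by simp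
      qed
      then show "Y \<in> carrier (KK Q) - {\<zero>\<^bsub>KK Q\<^esub>}" using Yc unfolding KK_simps by simp
    qed
  next
    show "carrier (KK Q) - {\<zero>\<^bsub>KK Q\<^esub>} \<subseteq> Units (KK Q)"
    proof
      fix Y assume "Y \<in> carrier (KK Q) - {\<zero>\<^bsub>KK Q\<^esub>}"
      then have Yc: "Y \<in> Kc Q" and Y0: "Y \<noteq> fr Q 0 1" unfolding KK_simps by auto
      obtain a b where ab: "b \<notin> Q" "Y = fr Q a b" using Yc by (metis KcE)
      have a: "a \<notin> Q" using Y0 ab fr_zero_iff[OF Q ab(1)] by simp
      have Xc: "fr Q b a \<in> Kc Q" using fr_in[OF a] .
      have e: "fr Q (b * a) (a * b) = fr Q 1 1"
        using fr_eq[OF Q pid_nmul[OF Q a ab(1)] o] pidD(1)[OF Q] by (simp add: mult.commute)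
      have "kmul Q (fr Q b a) Y = fr Q 1 1" using kmul_fr[OF Q a ab(1)] ab e by simp
      moreover have "kmul Q Y (fr Q b a) = fr Q 1 1" using kmul_fr[OF Q ab(1) a] ab e
        by (simp add: mult.commute)
      ultimately show "Y \<in> Units (KK Q)" unfolding Units_def KK_simps using Yc Xc by blast
    qed
  qed
qed

definition psi :: "'a::comm_ring_1 set \<Rightarrow> 'a \<Rightarrow> ('a \<times> 'a) set" where
  "psi Q r = fr Q r 1"

lemma psi_carr: "pid Q \<Longrightarrow> psi Q r \<in> carrier (KK Q)"
  unfolding psi_def KK_simps using fr_in pidD(4) by blast

lemma psi_add: "pid Q \<Longrightarrow> psi Q (a + b) = psi Q a \<oplus>\<^bsub>KK Q\<^esub> psi Q b"
  unfolding psi_def KK_simps using kadd_fr[of Q 1 1 a b] pidD(4)[of Q] by simp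

lemma psi_mult: "pid Q \<Longrightarrow> psi Q (a * b) = psi Q a \<otimes>\<^bsub>KK Q\<^esub> psi Q b"
  unfolding psi_def KK_simps using kmul_fr[of Q 1 1 a b] pidD(4)[of Q] by simp

lemma psi_one: "psi Q 1 = \<one>\<^bsub>KK Q\<^esub>"
  unfolding psi_def KK_simps by simp

lemma psi_zero: "psi Q 0 = \<zero>\<^bsub>KK Q\<^esub>"
  unfolding psi_def KK_simps by simp

lemma psi_neg: assumes Q: "pid Q" shows "psi Q (- a) = \<ominus>\<^bsub>KK Q\<^esub> psi Q a"
proof -
  interpret K: field "KK Q" using KK_field[OF Q] .
  have "psi Q (- a) \<oplus>\<^bsub>KK Q\<^esub> psi Q a = \<zero>\<^bsub>KK Q\<^esub>" using psi_add[OF Q, of "- a" a] psi_zero[of Q] by simp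
  then show ?thesis using K.minus_equality psi_carr[OF Q] by metis
qed

lemma psi_pow: assumes Q: "pid Q" shows "psi Q (a ^ n) = psi Q a [^]\<^bsub>KK Q\<^esub> n"
proof (induction n)
  case 0 then show ?case using psi_one by simp
next
  case (Suc n)
  interpret K: field "KK Q" using KK_field[OF Q] .
  show ?case using Suc psi_mult[OF Q, of "a ^ n" a] by (simp add: mult.commute)
qed

lemma fr_neg: assumes Q: "pid Q" and b: "b \<notin> Q" shows "\<ominus>\<^bsub>KK Q\<^esub> fr Q a b = fr Q (- a) b"
proof -
  interpret K: field "KK Q" using KK_field[OF Q] .
  have "fr Q (- a) b \<oplus>\<^bsub>KK Q\<^esub> fr Q a b = fr Q (- a * b + a * b) (b * b)"
    unfolding KK_simps using kadd_fr[OF Q b b] by simp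
  also have "\<dots> = \<zero>\<^bsub>KK Q\<^esub>" unfolding KK_simps using fr_zero_iff[OF Q pid_nmul[OF Q b b]] pidD(1)[OF Q] by simp
  finally show ?thesis using K.minus_equality fr_in[OF b] unfolding KK_simps by metis
qed

lemma fr_inv: assumes Q: "pid Q" and a: "a \<notin> Q" and b: "b \<notin> Q" shows "inv\<^bsub>KK Q\<^esub> fr Q a b = fr Q b a"
proof -
  interpret K: field "KK Q" using KK_field[OF Q] .
  have "fr Q a b \<otimes>\<^bsub>KK Q\<^esub> fr Q b a = fr Q (a * b) (b * a)" unfolding KK_simps using kmul_fr[OF Q b a] by simp
  also have "\<dots> = \<one>\<^bsub>KK Q\<^esub>" unfolding KK_simps
    using fr_eq[OF Q pid_nmul[OF Q b a] pidD(4)[OF Q]] pidD(1)[OF Q] by (simp add: mult.commute)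
  finally show ?thesis using K.finv_eqI fr_in[OF a] fr_in[OF b] unfolding KK_simps by metis
qed


lemma primepow_dvd:
  fixes p x :: "'b::idom"
  assumes p: "prime_elem p" and nx: "\<not> p dvd x"
  shows "p ^ n dvd x * y \<Longrightarrow> p ^ n dvd y"
proof (induction n arbitrary: y)
  case 0 then show ?case by simp
next
  case (Suc n)
  have "p dvd p ^ Suc n" by simp
  then have "p dvd x * y" using Suc.prems dvd_trans by blast
  then have "p dvd y" using p nx prime_elem_dvd_mult_iff by blast
  then obtain y' where y: "y = p * y'" by (auto simp: dvd_def)
  have p0: "p \<noteq> 0" using p by (simp add: prime_elem_def)
  have "p * p ^ n dvd p * (x * y')" using Suc.prems y by (simp add: ac_simps)
  then have "p ^ n dvd x * y'" using p0 by simp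
  then have "p ^ n dvd y'" by (rule Suc.IH)
  then show ?case using y by simp
qed

lemma pow_dvd_prod_le:
  fixes p :: "'b::idom"
  assumes p: "prime_elem p"
  shows "(\<forall>z\<in>set xs. Factorial_Ring.irreducible z) \<Longrightarrow> p ^ n dvd prod_list xs \<Longrightarrow> n \<le> length xs"
proof (induction xs arbitrary: n)
  case Nil
  show ?case
  proof (rule ccontr)
    assume "\<not> n \<le> length []"
    then obtain m where "n = Suc m" by (cases n) auto
    then have "p dvd 1" using Nil.prems(2) dvd_trans[of p "p ^ n" 1] by simp
    then show False using prime_elem_not_unit[OF p] by simp
  qed
next
  case (Cons x xs)
  show ?case
  proof (cases n)
    case 0 then show ?thesis by simp
  next
    case (Suc m)
    have irr: "Factorial_Ring.irreducible x" "\<forall>z\<in>set xs. Factorial_Ring.irreducible z" using Cons.prems(1) by auto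
    have d: "p ^ Suc m dvd x * prod_list xs" using Cons.prems(2) Suc by simp
    show ?thesis
    proof (cases "p dvd x")
      case True
      then obtain c where xc: "x = p * c" by (auto simp: dvd_def)
      have "p dvd 1 \<or> c dvd 1" using irreducibleD[OF irr(1) xc] .
      then have cu: "c dvd 1" using prime_elem_not_unit[OF p] by blast
      have p0: "p \<noteq> 0" using p by (simp add: prime_elem_def)
      have "p * p ^ m dvd p * (c * prod_list xs)" using d xc by (simp add: ac_simps)
      then have "p ^ m dvd c * prod_list xs" using p0 by simp
      then have "p ^ m dvd prod_list xs"
      proof -
        assume h: "p ^ m dvd c * prod_list xs"
        obtain e where e: "1 = c * e" using cu by (auto simp: dvd_def)
        have "prod_list xs = e * (c * prod_list xs)" using e by (simp add: ac_simps)
        then show ?thesis using h by (metis dvd_mult2 mult.commute)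
      qed
      then have "m \<le> length xs" using Cons.IH irr(2) by blast
      then show ?thesis using Suc by simp
    next
      case False
      have "p ^ Suc m dvd prod_list xs" using primepow_dvd[OF p False d] .
      then have "Suc m \<le> length xs" using Cons.IH irr(2) by blast
      then show ?thesis using Suc by simp
    qed
  qed
qed

lemma to_fract_pow: "to_fract (x ^ n) = to_fract x ^ n"
  by (induction n) simp_all

lemma sep_p:
  fixes p a :: "'b::idom"
  assumes h: "atomic_domain TYPE('b) \<or> completely_integrally_closed TYPE('b)" and p: "prime_elem p" and a: "a \<noteq> 0"
  shows "\<exists>n. \<not> p ^ n dvd a"
proof (rule ccontr)
  assume "\<not> (\<exists>n. \<not> p ^ n dvd a)"
  then have all: "\<And>n. p ^ n dvd a" by blast
  have p0: "p \<noteq> 0" using p by (simp add: prime_elem_def)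
  from h show False
  proof
    assume at: "atomic_domain TYPE('b)"
    have "\<not> a dvd 1"
    proof
      assume "a dvd 1"
      moreover have "p dvd a" using all[of 1] by simp
      ultimately have "p dvd 1" using dvd_trans by blast
      then show False using prime_elem_not_unit[OF p] by simp
    qed
    then obtain xs where xs: "\<forall>z\<in>set xs. Factorial_Ring.irreducible z" "a = prod_list xs"
      using at a unfolding atomic_domain_def by blast
    have "Suc (length xs) \<le> length xs" using pow_dvd_prod_le[OF p xs(1)] all[of "Suc (length xs)"] xs(2) by simp
    then show False by simp
  next
    assume cic: "completely_integrally_closed TYPE('b)"
    define u where "u = inverse (to_fract p)"
    have tp0: "to_fract p \<noteq> 0" using p0 by simp
    have "\<forall>n\<ge>1. to_fract a * u ^ n \<in> range to_fract"
    proof (intro allI impI)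
      fix n :: nat
      obtain c where c: "a = p ^ n * c" using all[of n] by (auto simp: dvd_def)
      have "to_fract a * u ^ n = to_fract c * (to_fract p ^ n * inverse (to_fract p) ^ n)"
        unfolding u_def c by (simp add: to_fract_pow ac_simps)
      also have "\<dots> = to_fract c" using tp0 by (simp add: power_mult_distrib[symmetric])
      finally show "to_fract a * u ^ n \<in> range to_fract" by simp
    qed
    then have "u \<in> range to_fract" using cic a unfolding completely_integrally_closed_def by blast
    then obtain c where c: "inverse (to_fract p) = to_fract c" unfolding u_def by blast
    have "to_fract p * to_fract c = 1" using c tp0 by (metis right_inverse)
    then have "to_fract (p * c) = to_fract 1" by simp
    then have "p * c = 1" by (simp only: to_fract_eq_iff)
    then have "p dvd 1" by (metis dvd_triv_left)
    then show False using prime_elem_not_unit[OF p] by simp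
  qed
qed

lemma factor_p:
  fixes p a :: "'b::idom"
  assumes h: "atomic_domain TYPE('b) \<or> completely_integrally_closed TYPE('b)" and p: "prime_elem p" and a: "a \<noteq> 0"
  shows "\<exists>k b. a = p ^ k * b \<and> \<not> p dvd b"
proof -
  obtain n where n: "\<not> p ^ n dvd a" using sep_p[OF h p a] by blast
  define m where "m = (LEAST n. \<not> p ^ n dvd a)"
  have nm: "\<not> p ^ m dvd a" unfolding m_def using LeastI[of "\<lambda>n. \<not> p ^ n dvd a", OF n] .
  have "m \<noteq> 0" using nm by (intro notI) simp
  then obtain k where k: "m = Suc k" by (cases m) auto
  then have "k < m" by simp
  then have "\<not> \<not> p ^ k dvd a" unfolding m_def by (rule not_less_Least)
  then obtain b where b: "a = p ^ k * b" by (auto simp: dvd_def)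
  have "\<not> p dvd b"
  proof
    assume "p dvd b"
    then have "p ^ k * p dvd p ^ k * b" by simp
    then show False using nm k b by (simp add: ac_simps)
  qed
  then show ?thesis using b by blast
qed

definition idl :: "'a::comm_ring_1 set \<Rightarrow> bool" where
  "idl I \<longleftrightarrow> 0 \<in> I \<and> (\<forall>x\<in>I. \<forall>y\<in>I. x + y \<in> I) \<and> (\<forall>x\<in>I. \<forall>r. r * x \<in> I)"

lemma exists_Q:
  fixes f :: "'b::idom \<Rightarrow> 'a::comm_ring_1"
  assumes inj: "inj f" and f1: "f 1 = 1" and fadd: "\<And>x y. f (x + y) = f x + f y"
    and fmul: "\<And>x y. f (x * y) = f x * f y"
  shows "\<exists>Q. pid Q \<and> (\<forall>d. d \<noteq> 0 \<longrightarrow> f d \<notin> Q)"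
proof -
  have f0: "f 0 = 0" using fadd[of 0 0] by simp
  define M where "M = {f d | d. d \<noteq> 0}"
  have M0: "0 \<notin> M" unfolding M_def using inj f0 by (auto simp: inj_def)
  define A where "A = {I. idl I \<and> I \<inter> M = {}}"
  have "\<exists>Q\<in>A. \<forall>X\<in>A. Q \<subseteq> X \<longrightarrow> X = Q"
  proof (rule subset_Zorn_nonempty)
    have "{0} \<in> A" unfolding A_def idl_def using M0 by auto
    then show "A \<noteq> {}" by blast
  next
    fix C assume C: "C \<noteq> {}" "subset.chain A C"
    then have CA: "C \<subseteq> A" and comp: "\<forall>X\<in>C. \<forall>Y\<in>C. X \<subseteq> Y \<or> Y \<subseteq> X"
      by (auto simp: subset_chain_def)
    have "idl (\<Union>C)" unfolding idl_def
    proof (intro conjI ballI allI)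
      obtain I where "I \<in> C" using C(1) by blast
      then show "0 \<in> \<Union>C" using CA unfolding A_def idl_def by blast
    next
      fix x y assume "x \<in> \<Union>C" "y \<in> \<Union>C"
      then obtain I J where IJ: "I \<in> C" "J \<in> C" "x \<in> I" "y \<in> J" by blast
      then have "(x \<in> I \<and> y \<in> I) \<or> (x \<in> J \<and> y \<in> J)" using comp by blast
      then show "x + y \<in> \<Union>C" using IJ CA unfolding A_def idl_def by blast
    next
      fix x r assume "x \<in> \<Union>C"
      then obtain I where "I \<in> C" "x \<in> I" by blast
      then show "r * x \<in> \<Union>C" using CA unfolding A_def idl_def by blast
    qed
    moreover have "\<Union>C \<inter> M = {}" using CA unfolding A_def by blast
    ultimately show "\<Union>C \<in> A" unfolding A_def by blast
  qed
  then obtain Q where QA: "Q \<in> A" and Qmax: "\<forall>X\<in>A. Q \<subseteq> X \<longrightarrow> X = Q" by blast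
  have iQ: "idl Q" and QM: "Q \<inter> M = {}" using QA unfolding A_def by auto
  have QM': "f d \<notin> Q" if "d \<noteq> 0" for d using QM that unfolding M_def by blast
  have one: "(1::'a) \<notin> Q" using QM'[of 1] f1 by simp
  have ext: "\<exists>q r d. q \<in> Q \<and> d \<noteq> 0 \<and> q + r * a = f d" if a: "a \<notin> Q" for a
  proof -
    define Qa where "Qa = {q + r * a | q r. q \<in> Q}"
    have "idl Qa" unfolding idl_def
    proof (intro conjI ballI allI)
      show "0 \<in> Qa" unfolding Qa_def using iQ unfolding idl_def by (intro CollectI exI[of _ 0]) auto
    next
      fix x y assume "x \<in> Qa" "y \<in> Qa"
      then obtain q1 r1 q2 r2 where "q1 \<in> Q" "x = q1 + r1 * a" "q2 \<in> Q" "y = q2 + r2 * a" unfolding Qa_def by blast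
      then show "x + y \<in> Qa" unfolding Qa_def using iQ unfolding idl_def
        by (intro CollectI exI[of _ "q1 + q2"] exI[of _ "r1 + r2"]) (auto simp: algebra_simps)
    next
      fix x s assume "x \<in> Qa"
      then obtain q r where "q \<in> Q" "x = q + r * a" unfolding Qa_def by blast
      then show "s * x \<in> Qa" unfolding Qa_def using iQ unfolding idl_def
        by (intro CollectI exI[of _ "s * q"] exI[of _ "s * r"]) (auto simp: algebra_simps)
    qed
    moreover have "Q \<subseteq> Qa"
    proof
      fix x assume "x \<in> Q"
      then show "x \<in> Qa" unfolding Qa_def by (intro CollectI exI[of _ x] exI[of _ 0]) simp
    qed
    moreover have "a \<in> Qa" unfolding Qa_def using iQ unfolding idl_def by (intro CollectI exI[of _ 0] exI[of _ 1]) auto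
    ultimately have "Qa \<notin> A" using Qmax a by blast
    then have "Qa \<inter> M \<noteq> {}" using \<open>idl Qa\<close> unfolding A_def by blast
    then show ?thesis unfolding Qa_def M_def by blast
  qed
  have "pid Q" unfolding pid_def
  proof (intro conjI allI impI ballI)
    show "0 \<in> Q" using iQ unfolding idl_def by blast
    show "\<And>x y. x \<in> Q \<Longrightarrow> y \<in> Q \<Longrightarrow> x + y \<in> Q" using iQ unfolding idl_def by blast
    show "\<And>x r. x \<in> Q \<Longrightarrow> r * x \<in> Q" using iQ unfolding idl_def by blast
    show "1 \<notin> Q" by (rule one)
  next
    fix a b :: 'a assume ab: "a * b \<in> Q"
    show "a \<in> Q \<or> b \<in> Q"
    proof (rule ccontr)
      assume "\<not> (a \<in> Q \<or> b \<in> Q)"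
      then have na: "a \<notin> Q" "b \<notin> Q" by auto
      obtain q1 r1 d1 where 1: "q1 \<in> Q" "d1 \<noteq> 0" "q1 + r1 * a = f d1" using ext[OF na(1)] by blast
      obtain q2 r2 d2 where 2: "q2 \<in> Q" "d2 \<noteq> 0" "q2 + r2 * b = f d2" using ext[OF na(2)] by blast
      have "f (d1 * d2) = (q1 + r1 * a) * (q2 + r2 * b)" using 1(3) 2(3) fmul by simp
      also have "\<dots> = q1 * (q2 + r2 * b) + q2 * (r1 * a) + (r1 * r2) * (a * b)"
        by (simp add: algebra_simps)
      also have "\<dots> \<in> Q" using iQ 1(1) 2(1) ab unfolding idl_def by (metis mult.commute)
      finally have "f (d1 * d2) \<in> Q" .
      then show False using QM' 1(2) 2(2) by simp
    qed
  qed
  then show ?thesis using QM' by blast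
qed


lemma is_subringD: assumes "is_subring W"
  shows "1 \<in> W" "\<And>x y. x \<in> W \<Longrightarrow> y \<in> W \<Longrightarrow> x + y \<in> W" "\<And>x y. x \<in> W \<Longrightarrow> y \<in> W \<Longrightarrow> x * y \<in> W"
    "\<And>x. x \<in> W \<Longrightarrow> - x \<in> W"
  using assms unfolding is_subring_def by auto

lemma is_subring_pow: "is_subring W \<Longrightarrow> x \<in> W \<Longrightarrow> x ^ n \<in> W"
  by (induction n) (auto dest: is_subringD)

lemma is_subring_chain:
  assumes C: "C \<noteq> {}" "\<forall>W\<in>C. is_subring W" "\<forall>X1\<in>C. \<forall>Y1\<in>C. X1 \<subseteq> Y1 \<or> Y1 \<subseteq> X1"
  shows "is_subring (\<Union>C)"
  unfolding is_subring_def
proof (intro conjI ballI)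
  obtain Z where "Z \<in> C" using C(1) by blast
  then show "1 \<in> \<Union>C" using C(2) is_subringD(1) by blast
next
  fix a b assume "a \<in> \<Union>C" "b \<in> \<Union>C"
  then obtain X1 Y1 where XY: "X1 \<in> C" "Y1 \<in> C" "a \<in> X1" "b \<in> Y1" by blast
  have "\<exists>Z\<in>C. a \<in> Z \<and> b \<in> Z"
  proof (cases "X1 \<subseteq> Y1")
    case True then show ?thesis using XY by blast
  next
    case False then have "Y1 \<subseteq> X1" using C(3) XY(1,2) by blast
    then show ?thesis using XY by blast
  qed
  then obtain Z where Z: "Z \<in> C" "a \<in> Z" "b \<in> Z" by blast
  have sZ: "is_subring Z" using C(2) Z(1) by blast
  show "a + b \<in> \<Union>C" using is_subringD(2)[OF sZ Z(2,3)] Z(1) by blast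
  show "a * b \<in> \<Union>C" using is_subringD(3)[OF sZ Z(2,3)] Z(1) by blast
next
  fix a assume "a \<in> \<Union>C"
  then obtain Z where Z: "Z \<in> C" "a \<in> Z" by blast
  have sZ: "is_subring Z" using C(2) Z(1) by blast
  show "- a \<in> \<Union>C" using is_subringD(4)[OF sZ Z(2)] Z(1) by blast
qed

lemma final_R:
  fixes A :: "'a::comm_ring_1 set"
  assumes A: "is_subring A" and tA: "tR \<in> A" and xA: "xR \<notin> A" and tx: "tR * xR = 1"
    and ab: "\<forall>y. \<exists>k::nat. tR ^ k * y \<in> A"
  shows "\<exists>V::'a set. conch_maximal_subring V"
proof -
  define H where "H = {W. is_subring W \<and> A \<subseteq> W \<and> xR \<notin> W}"
  have "\<exists>V\<in>H. \<forall>X1\<in>H. V \<subseteq> X1 \<longrightarrow> X1 = V"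
  proof (rule subset_Zorn_nonempty)
    show "H \<noteq> {}" unfolding H_def using A xA by blast
  next
    fix C assume C: "C \<noteq> {}" "subset.chain H C"
    then have CH: "C \<subseteq> H" and comp: "\<forall>X1\<in>C. \<forall>Y1\<in>C. X1 \<subseteq> Y1 \<or> Y1 \<subseteq> X1"
      by (auto simp: subset_chain_def)
    have "is_subring (\<Union>C)" using is_subring_chain[OF C(1) _ comp] CH unfolding H_def by blast
    moreover have "A \<subseteq> \<Union>C" using C(1) CH unfolding H_def by blast
    moreover have "xR \<notin> \<Union>C" using CH unfolding H_def by blast
    ultimately show "\<Union>C \<in> H" unfolding H_def by blast
  qed
  then obtain V where VH: "V \<in> H" and Vmax: "\<forall>X1\<in>H. V \<subseteq> X1 \<longrightarrow> X1 = V" by blast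
  have VV: "is_subring V" "A \<subseteq> V" "xR \<notin> V" using VH unfolding H_def by auto
  have ms: "maximal_subring V" unfolding maximal_subring_def
  proof (intro conjI allI impI)
    show "is_subring V" using VV(1) .
    show "V \<noteq> UNIV" using VV(3) by blast
  next
    fix W assume W: "is_subring W \<and> V \<subseteq> W \<and> W \<noteq> UNIV"
    show "W = V"
    proof (cases "xR \<in> W")
      case False
      then have "W \<in> H" unfolding H_def using W VV by blast
      then show ?thesis using Vmax W by blast
    next
      case True
      have "W = UNIV"
      proof (rule Set.set_eqI, rule iffI)
        fix y :: 'a
        obtain k where k: "tR ^ k * y \<in> A" using ab by blast
        then have "tR ^ k * y \<in> W" using VV(2) W by blast
        moreover have "xR ^ k \<in> W" using is_subring_pow[of W xR k] W True by blast
        ultimately have "xR ^ k * (tR ^ k * y) \<in> W" using is_subringD(3) W by blast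
        moreover have "xR ^ k * (tR ^ k * y) = y"
        proof -
          have "xR ^ k * (tR ^ k * y) = (tR * xR) ^ k * y" by (simp add: power_mult_distrib ac_simps)
          then show ?thesis using tx by simp
        qed
        ultimately show "y \<in> W" by simp
      qed simp
      then show ?thesis using W by blast
    qed
  qed
  have tV: "tR \<in> V" using tA VV(2) by blast
  have cV: "conches V xR" unfolding conches_def
  proof (intro exI[of _ tR] conjI allI impI)
    show "xR * tR = 1" using tx by (simp add: mult.commute)
    show "is_subring V" "tR \<in> V" "xR \<notin> V" using VV tV by auto
  next
    fix W assume W: "is_subring W \<and> V \<subseteq> W \<and> tR \<in> W \<and> xR \<notin> W"
    then have "W \<in> H" unfolding H_def using VV by blast
    then show "W = V" using Vmax W by blast
  qed
  have "xR dvd 1" using tx by (metis dvd_triv_right)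
  then show ?thesis using ms cV unfolding conch_maximal_subring_def by blast
qed

lemma S0_GG:
  fixes f :: "'b::idom \<Rightarrow> 'a::comm_ring_1" and p :: 'b
  assumes Q: "pid Q" and fQ: "\<forall>d. d \<noteq> 0 \<longrightarrow> f d \<notin> Q"
    and f1: "f 1 = 1" and fadd: "\<And>x y. f (x + y) = f x + f y" and fmul: "\<And>x y. f (x * y) = f x * f y"
    and p: "prime_elem p"
    and fac: "\<And>a. a \<noteq> 0 \<Longrightarrow> \<exists>k b. a = p ^ k * b \<and> \<not> p dvd b"
  shows "{fr Q (f a) (f s) | a s. \<not> p dvd s} \<in> field.GG (KK Q) (fr Q (f p) 1)"
proof -
  interpret K: field "KK Q" by (rule KK_field[OF Q])
  have f0: "f 0 = 0" using fadd[of 0 0] by simp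
  have fneg: "f (- x) = - f x" for x
  proof -
    have h: "f x + f (- x) = 0" using fadd[of x "- x"] f0 by simp
    have "f (- x) = (f x + f (- x)) - f x" by simp
    then show ?thesis using h by simp
  qed
  have fdiff: "f (x - y) = f x - f y" for x y using fadd[of x "- y"] fneg[of y] by simp
  have fpow: "f (x ^ n) = f x ^ n" for x n by (induction n) (simp_all add: f1 fmul)
  have ns: "f s \<notin> Q" if "\<not> p dvd s" for s using fQ that by (metis dvd_0_right)
  have one1: "(1::'a) \<notin> Q" using pidD(4)[OF Q] .
  have p0: "p \<noteq> 0" using p by (simp add: prime_elem_def)
  have pQ: "f p \<notin> Q" using fQ p0 by blast
  have np1: "\<not> p dvd 1" using prime_elem_not_unit[OF p] .
  have npm: "\<not> p dvd (s * s')" if "\<not> p dvd s" "\<not> p dvd s'" for s s' using that prime_elem_dvd_mult_iff[OF p] by blast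
  define S0 where "S0 = {fr Q (f a) (f s) | a s. \<not> p dvd s}"
  define t where "t = fr Q (f p) 1"
  have memS0: "fr Q (f a) (f s) \<in> S0" if "\<not> p dvd s" for a s unfolding S0_def using that by blast
  have sr: "K.sr S0" unfolding K.sr_def
  proof (intro conjI ballI)
    show "S0 \<subseteq> carrier (KK Q)" unfolding S0_def KK_simps using fr_in ns by blast
    show "\<one>\<^bsub>KK Q\<^esub> \<in> S0" unfolding KK_simps using memS0[OF np1, of 1] f1 by simp
  next
    fix x y assume "x \<in> S0" "y \<in> S0"
    then obtain a s b s' where h: "\<not> p dvd s" "x = fr Q (f a) (f s)" "\<not> p dvd s'" "y = fr Q (f b) (f s')"
      unfolding S0_def by blast
    have "x \<oplus>\<^bsub>KK Q\<^esub> y = fr Q (f a * f s' + f b * f s) (f s * f s')"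
      unfolding KK_simps using kadd_fr[OF Q ns[OF h(1)] ns[OF h(3)]] h by simp
    also have "\<dots> = fr Q (f (a * s' + b * s)) (f (s * s'))" by (simp add: fadd fmul)
    finally show "x \<oplus>\<^bsub>KK Q\<^esub> y \<in> S0" using memS0[OF npm[OF h(1) h(3)]] by simp
    have "x \<otimes>\<^bsub>KK Q\<^esub> y = fr Q (f a * f b) (f s * f s')"
      unfolding KK_simps using kmul_fr[OF Q ns[OF h(1)] ns[OF h(3)]] h by simp
    also have "\<dots> = fr Q (f (a * b)) (f (s * s'))" by (simp add: fmul)
    finally show "x \<otimes>\<^bsub>KK Q\<^esub> y \<in> S0" using memS0[OF npm[OF h(1) h(3)]] by simp
  next
    fix x assume "x \<in> S0"
    then obtain a s where h: "\<not> p dvd s" "x = fr Q (f a) (f s)" unfolding S0_def by blast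
    have "\<ominus>\<^bsub>KK Q\<^esub> x = fr Q (f (- a)) (f s)" using fr_neg[OF Q ns[OF h(1)]] h fneg by simp
    then show "\<ominus>\<^bsub>KK Q\<^esub> x \<in> S0" using memS0[OF h(1)] by simp
  qed
  have tS: "t \<in> S0" unfolding t_def using memS0[OF np1, of p] f1 by simp
  have t0: "t \<noteq> \<zero>\<^bsub>KK Q\<^esub>" unfolding t_def KK_simps using fr_zero_iff[OF Q one1] pQ by simp
  have it: "inv\<^bsub>KK Q\<^esub> t \<notin> S0"
  proof
    assume "inv\<^bsub>KK Q\<^esub> t \<in> S0"
    moreover have "inv\<^bsub>KK Q\<^esub> t = fr Q 1 (f p)" unfolding t_def using fr_inv[OF Q pQ one1] .
    ultimately obtain a s where h: "\<not> p dvd s" "fr Q 1 (f p) = fr Q (f a) (f s)" unfolding S0_def by blast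
    then have "1 * f s - f a * f p \<in> Q" using fr_eq[OF Q pQ ns[OF h(1)]] by simp
    then have "f (s - a * p) \<in> Q" by (simp add: fdiff fmul)
    then have "s - a * p = 0" using fQ by blast
    then have "p dvd s" by simp
    then show False using h(1) by simp
  qed
  have dv: "K.dvrl S0 t" unfolding K.dvrl_def
  proof (intro ballI impI)
    fix x assume x: "x \<in> S0" "x \<noteq> \<zero>\<^bsub>KK Q\<^esub>"
    then obtain a s where h: "\<not> p dvd s" "x = fr Q (f a) (f s)" unfolding S0_def by blast
    have a0: "a \<noteq> 0"
    proof
      assume "a = 0"
      then have "x = fr Q 0 1" using h fr_zero_iff[OF Q ns[OF h(1)]] f0 pidD(1)[OF Q] by simp
      then show False using x(2) unfolding KK_simps by simp
    qed
    obtain k b where kb: "a = p ^ k * b" "\<not> p dvd b" using fac[OF a0] by blast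
    have b0: "b \<noteq> 0" using kb(2) by auto
    define u where "u = fr Q (f b) (f s)"
    have uS: "u \<in> S0" unfolding u_def using memS0[OF h(1)] .
    have u0: "u \<noteq> \<zero>\<^bsub>KK Q\<^esub>" unfolding u_def KK_simps using fr_zero_iff[OF Q ns[OF h(1)]] fQ b0 by simp
    have iu: "inv\<^bsub>KK Q\<^esub> u \<in> S0" unfolding u_def using fr_inv[OF Q _ ns[OF h(1)], of "f b"] fQ b0 memS0[OF kb(2)] by simp
    have "K.unitS S0 u" unfolding K.unitS_def using uS u0 iu by simp
    moreover have "x = t [^]\<^bsub>KK Q\<^esub> k \<otimes>\<^bsub>KK Q\<^esub> u"
    proof -
      have "t [^]\<^bsub>KK Q\<^esub> k = fr Q (f p ^ k) 1" unfolding t_def using psi_pow[OF Q, of "f p" k] unfolding psi_def by simp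
      then have "t [^]\<^bsub>KK Q\<^esub> k \<otimes>\<^bsub>KK Q\<^esub> u = fr Q (f p ^ k * f b) (1 * f s)"
        unfolding u_def KK_simps using kmul_fr[OF Q one1 ns[OF h(1)]] by simp
      also have "\<dots> = x" using h kb by (simp add: fmul fpow)
      finally show ?thesis by simp
    qed
    ultimately show "\<exists>k::nat. \<exists>u. K.unitS S0 u \<and> x = t [^]\<^bsub>KK Q\<^esub> k \<otimes>\<^bsub>KK Q\<^esub> u" by blast
  qed
  have "S0 \<in> K.GG t" unfolding K.GG_def using sr tS t0 it dv by simp
  then show ?thesis unfolding S0_def t_def .
qed

theorem corollary2p2:
  fixes f :: "'b::idom \<Rightarrow> 'a::comm_ring_1"
  assumes "atomic_domain TYPE('b) \<or> completely_integrally_closed TYPE('b)"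
    and "inj f"
    and "f 1 = 1"
    and "\<And>x y. f (x + y) = f x + f y"
    and "\<And>x y. f (x * y) = f x * f y"
    and "\<exists>p::'b. prime_elem p \<and> f p dvd 1"
  shows "\<exists>V::'a set. conch_maximal_subring V"
proof -
  obtain p where p: "prime_elem p" "f p dvd 1" using assms(6) by blast
  obtain xR where xR: "1 = f p * xR" using p(2) unfolding dvd_def by blast
  obtain Q where Q: "pid Q" "\<forall>d. d \<noteq> 0 \<longrightarrow> f d \<notin> Q" using exists_Q[OF assms(2-5)] by blast
  interpret K: field "KK Q" by (rule KK_field[OF Q(1)])
  define t where "t = fr Q (f p) 1"
  have fac: "\<And>a. a \<noteq> 0 \<Longrightarrow> \<exists>k b. a = p ^ k * b \<and> \<not> p dvd b" using factor_p[OF assms(1) p(1)] by blast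
  have G: "{fr Q (f a) (f s) | a s. \<not> p dvd s} \<in> K.GG t"
    unfolding t_def using S0_GG[OF Q(1) Q(2) assms(3-5) p(1) fac] by blast
  obtain V where V: "K.sr V" "t \<in> V" "inv\<^bsub>KK Q\<^esub> t \<notin> V"
      "\<forall>y\<in>carrier (KK Q). \<exists>k::nat. t [^]\<^bsub>KK Q\<^esub> k \<otimes>\<^bsub>KK Q\<^esub> y \<in> V"
    using K.field_main[OF G] by blast
  define A where "A = {r. psi Q r \<in> V}"
  have tpsi: "t = psi Q (f p)" unfolding t_def psi_def ..
  have Asub: "is_subring A" unfolding is_subring_def A_def
  proof (intro conjI ballI; simp only: mem_Collect_eq)
    show "psi Q 1 \<in> V" using psi_one[of Q] K.srD(2)[OF V(1)] by simp
  next
    fix x y assume "psi Q x \<in> V" "psi Q y \<in> V"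
    then show "psi Q (x + y) \<in> V" "psi Q (x * y) \<in> V"
      using psi_add[OF Q(1)] psi_mult[OF Q(1)] K.srD(3,4)[OF V(1)] by auto
  next
    fix x assume "psi Q x \<in> V"
    then show "psi Q (- x) \<in> V" using psi_neg[OF Q(1)] K.srD(5)[OF V(1)] by auto
  qed
  have tA: "f p \<in> A" unfolding A_def using V(2) tpsi by simp
  have xA: "xR \<notin> A"
  proof -
    have "t \<otimes>\<^bsub>KK Q\<^esub> psi Q xR = psi Q (f p * xR)" using tpsi psi_mult[OF Q(1)] by simp
    also have "\<dots> = \<one>\<^bsub>KK Q\<^esub>" using xR[symmetric] psi_one by simp
    finally have "inv\<^bsub>KK Q\<^esub> t = psi Q xR"
      using K.finv_eqI[of t "psi Q xR"] psi_carr[OF Q(1)] tpsi by simp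
    then show ?thesis unfolding A_def using V(3) by simp
  qed
  have ab: "\<forall>y. \<exists>k::nat. f p ^ k * y \<in> A"
  proof
    fix y
    obtain k where "t [^]\<^bsub>KK Q\<^esub> (k::nat) \<otimes>\<^bsub>KK Q\<^esub> psi Q y \<in> V" using V(4) psi_carr[OF Q(1)] by blast
    moreover have "psi Q (f p ^ k * y) = t [^]\<^bsub>KK Q\<^esub> k \<otimes>\<^bsub>KK Q\<^esub> psi Q y"
      using psi_mult[OF Q(1)] psi_pow[OF Q(1)] tpsi by simp
    ultimately have "psi Q (f p ^ k * y) \<in> V" by simp
    then show "\<exists>k::nat. f p ^ k * y \<in> A" unfolding A_def by blast
  qed
  show ?thesis using final_R[OF Asub tA xA xR[symmetric] ab] .
qed


end
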